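(* Assume $(\boldsymbol\lambda,\boldsymbol\mu)$ satisfies (H) (notation as there), that $(\gamma,\delta)\ne(0,0)$ and that $h\equiv\eta\pmod{nl}$ with $\eta\in\{\gamma,\delta\}$. Let $N$ be the length of the unique good sequence with respect to $(\lambda,\mu)$. Then $$(-1)^{N-1}=(-1)^{\mathrm{ht}(\rho)+\mathrm{ht}(\rho')}\,\varepsilon(\boldsymbol\lambda,\boldsymbol\mu)\,\varepsilon,$$ where $\varepsilon(\boldsymbol\lambda,\boldsymbol\mu)=(-1)^{\kappa(\mathbf d(\mu))+\ell(v(\omega.\boldsymbol\beta(\mu)))+\ell(v(\boldsymbol\beta(\lambda)))}$ and $\varepsilon=1$ if $\delta>0$ and $h\equiv\delta\pmod{nl}$, $\varepsilon=-1$ otherwise.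
   Context: Fix $n,l,m\ge1$, $\mathbf s_l=(s_1,\dots,s_l)\in\mathbb Z^l$, $s=\sum s_b$. Partitions are identified with Young diagrams. Ribbon: nonempty connected skew diagram with no $2\times2$ square; head/tail = node with $j-i$ minimal/maximal; $\mathrm{ht}$ = row of head minus row of tail. Each $k\in\mathbb Z$ is uniquely $k=c(k)+n(d(k)-1)+nl\,m(k)$, $c(k)\in\{1..n\}$, $d(k)\in\{1..l\}$; $\phi(k)=c(k)+n\,m(k)$. $\Pi^l_m$ = $l$-tuples of partitions of total size $m$; $\boldsymbol\lambda\leftrightarrow\lambda$ iff $\{(\lambda^{(b)}_i+s_b+1-i,b)\}=\{(\phi(k),d(k)):k\in\{\lambda_i+s+1-i:i\ge1\}\}$; $\boldsymbol\lambda\prec\boldsymbol\mu$ iff $\lambda\lhd\mu$ (strict dominance). For $|\lambda|=r$, $\boldsymbol\beta(\lambda)=(\lambda_i+s+1-i)_{i\le r}$, $B(\lambda)$ its set. Tuples: $\mathbf d(\mathbf k)=(d(k_i))_i$; $\sigma.(k_1,\dots,k_r)=(k_{\sigma^{-1}(1)},\dots)$; $v(\mathbf k)$ is the minimal-length $\sigma\in\mathfrak S_r$ with $\mathbf d(\mathbf k)=\sigma.\mathbf b$, $\mathbf b$ the weakly decreasing rearrangement of $\mathbf d(\mathbf k)$; $\ell$ Coxeter length; $\kappa(\mathbf a)=\#\{i<j:a_i=a_j\}$; $\omega$ longest element; $\mathbf d(\mu)=\mathbf d(\boldsymbol\beta(\mu))$. (J1): $\boldsymbol\lambda\ne\boldsymbol\mu$,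 there are $d\ne d'$ with $\mu^{(d)}\subset\lambda^{(d)}$, $\lambda^{(d')}\subset\mu^{(d')}$, $\lambda^{(b)}=\mu^{(b)}$ otherwise, $\rho:=\lambda^{(d)}/\mu^{(d)}$, $\rho':=\mu^{(d')}/\lambda^{(d')}$ ribbons of common length. (J2): $\boldsymbol\lambda\ne\boldsymbol\mu$, there is $d$ with $\lambda^{(b)}=\mu^{(b)}$ for $b\ne d$, $\rho:=\lambda^{(d)}/(\lambda^{(d)}\cap\mu^{(d)})$, $\rho':=\mu^{(d)}/(\lambda^{(d)}\cap\mu^{(d)})$ ribbons of common length. (H): $\boldsymbol\lambda\leftrightarrow\lambda$, $\boldsymbol\mu\leftrightarrow\mu$, $\boldsymbol\lambda\prec\boldsymbol\mu$, $|\lambda|=|\mu|=r$, $\#(B(\lambda)\cap B(\mu))=r-2$. Under (H), (J1) or (J2) holds (giving $\rho,\rho'$); $\boldsymbol\beta(\mu)=(\beta_i)$; $\lambda/(\lambda\cap\mu)$ and $\mu/(\lambda\cap\mu)$ are ribbons of common length $h$; $x$ = row of the head of $\lambda/(\lambda\cap\mu)$, $y$ = row of the tail of $\mu/(\lambda\cap\mu)$; $B(\lambda)=(B(\mu)\setminus\{\beta_x,\beta_y\})\cup\{\beta_x+h,\beta_y-h\}$; $\gamma,\delta\in\{0..nl-1\}$ are the residues mod $nl$ of $c(\beta_y)-c(\beta_x)$ and $n(d(\beta_y)-d(\beta_x))$. Wedge space (Uglov): $\mathbb C(q)$-span of $v_{k_1}\wedge v_{k_2}\wedge\cdots$ ($k_i=s+1-i$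 for $i\gg0$) with basis the ordered symbols; an adjacent pair $v_{k_1}\wedge v_{k_2}$, $k_1\le k_2$, is straightened by (with $\gamma',\delta'$ the residues mod $nl$ of $c(k_2)-c(k_1)$, $n(d(k_2)-d(k_1))$; sums over $i$ giving ordered two-factor wedges): (R1) $\gamma'=\delta'=0$: $v_{k_1}\wedge v_{k_2}=-v_{k_2}\wedge v_{k_1}$. (R2) $\gamma'>0,\delta'=0$: $=-q^{-1}v_{k_2}\wedge v_{k_1}-(q^{-2}-1)\sum_{i\ge1}q^{-2i+1}v_{k_2-nli}\wedge v_{k_1+nli}+(q^{-2}-1)\sum_{i\ge0}q^{-2i}v_{k_2-\gamma'-nli}\wedge v_{k_1+\gamma'+nli}$. (R3) $\gamma'=0,\delta'>0$: $=-qv_{k_2}\wedge v_{k_1}-(q^2-1)\sum_{i\ge1}q^{2i-1}v_{k_2-nli}\wedge v_{k_1+nli}+(q^2-1)\sum_{i\ge0}q^{2i}v_{k_2-\delta'-nli}\wedge v_{k_1+\delta'+nli}$. (R4) $\gamma',\delta'>0$: $=-v_{k_2}\wedge v_{k_1}-(q-q^{-1})\sum_{i\ge1}\frac{q^{2i}-q^{-2i}}{q+q^{-1}}v_{k_2-nli}\wedge v_{k_1+nli}-(q-q^{-1})\sum_{i\ge0}\frac{q^{2i+1}+q^{-2i-1}}{q+q^{-1}}v_{k_2-\gamma'-nli}\wedge v_{k_1+\gamma'+nli}+(q-q^{-1})\sum_{i\ge0}\frac{q^{2i+1}+q^{-2i-1}}{q+q^{-1}}v_{k_2-\delta'-nli}\wedge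 v_{k_1+\delta'+nli}+(q-q^{-1})\sum_{i\ge0}\frac{q^{2i+2}-q^{-2i-2}}{q+q^{-1}}v_{k_2-\gamma'-\delta'-nli}\wedge v_{k_1+\gamma'+\delta'+nli}$. Sequences: wedges $v_{\mathbf k}$ with first $r$ indices $\mathbf k$ and fixed tail $s-r,s-r-1,\dots$; $v_\lambda=v_{\boldsymbol\beta(\lambda)}$, $v_{\omega.\mu}=v_{\omega.\boldsymbol\beta(\mu)}$. $v_{\mathbf k}\to v_{\mathbf l}$ if there is $i$ with $k_i\le k_{i+1}$, $k_j>k_{j+1}$ for $j<i$, $k_j=l_j$ for $j\notin\{i,i+1\}$, and $v_{l_i}\wedge v_{l_{i+1}}$ has nonzero coefficient in the straightening of $v_{k_i}\wedge v_{k_{i+1}}$ by the applicable rule; such a step has $m=0$ if $(l_i,l_{i+1})=(k_{i+1},k_i)$, else $m=1$. A good sequence for $(\lambda,\mu)$ is a chain $v_{\omega.\mu}=v_{\mathbf k_0}\to\cdots\to v_{\mathbf k_N}=v_\lambda$ with total $m$ equal to $1$; $N$ is its length. Under the hypotheses such a sequence exists and is unique. *)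

theory Defs
  imports Complex_Main "HOL-Combinatorics.Permutations" "HOL-Number_Theory.Cong"
begin

definition is_partition :: "nat list \<Rightarrow> bool" where
  "is_partition lam \<longleftrightarrow> sorted_wrt (\<ge>) lam \<and> 0 \<notin> set lam"

text \<open>The i-th part (1-indexed), 0 beyond the length.\<close>
definition partI :: "nat list \<Rightarrow> nat \<Rightarrow> nat" where
  "partI lam i = (if 1 \<le> i \<and> i \<le> length lam then lam ! (i - 1) else 0)"

text \<open>Young diagram: nodes (row, column), both 1-indexed.\<close>
definition diagram :: "nat list \<Rightarrow> (nat \<times> nat) set" where
  "diagram lam = {(i, j). 1 \<le> i \<and> 1 \<le> j \<and> j \<le> partI lam i}"

definition adjacent :: "nat \<times> nat \<Rightarrow> nat \<times> nat \<Rightarrow> bool" where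
  "adjacent p q \<longleftrightarrow>
     (fst p = fst q \<and> (snd p = snd q + 1 \<or> snd q = snd p + 1)) \<or>
     (snd p = snd q \<and> (fst p = fst q + 1 \<or> fst q = fst p + 1))"

definition connected_nodes :: "(nat \<times> nat) set \<Rightarrow> bool" where
  "connected_nodes S \<longleftrightarrow>
     (\<forall>p\<in>S. \<forall>q\<in>S. (p, q) \<in> {(a, b). a \<in> S \<and> b \<in> S \<and> adjacent a b}\<^sup>*)"

definition ribbon :: "(nat \<times> nat) set \<Rightarrow> bool" where
  "ribbon S \<longleftrightarrow> S \<noteq> {} \<and> finite S \<and> connected_nodes S \<and>
     \<not> (\<exists>i j. (i, j) \<in> S \<and> (i + 1, j) \<in> S \<and> (i, j + 1) \<in> S \<and> (i + 1, j + 1) \<in> S)"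

definition content :: "nat \<times> nat \<Rightarrow> int" where
  "content p = int (snd p) - int (fst p)"

definition head :: "(nat \<times> nat) set \<Rightarrow> nat \<times> nat" where
  "head S = (THE p. p \<in> S \<and> (\<forall>q\<in>S. content p \<le> content q))"

definition tail :: "(nat \<times> nat) set \<Rightarrow> nat \<times> nat" where
  "tail S = (THE p. p \<in> S \<and> (\<forall>q\<in>S. content q \<le> content p))"

definition ht :: "(nat \<times> nat) set \<Rightarrow> int" where
  "ht S = int (fst (head S)) - int (fst (tail S))"

definition dominance_lt :: "nat list \<Rightarrow> nat list \<Rightarrow> bool" where
  "dominance_lt lam mu \<longleftrightarrow> sum_list lam = sum_list mu \<and>
     (\<forall>k. (\<Sum>i=1..k. partI lam i) \<le> (\<Sum>i=1..k. partI mu i)) \<and> lam \<noteq> mu"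

section \<open>The decomposition k = c(k) + n(d(k)-1) + nl m(k)\<close>

definition cc :: "nat \<Rightarrow> nat \<Rightarrow> int \<Rightarrow> int" where
  "cc n l k = (k - 1) mod (int n * int l) mod int n + 1"

definition dd :: "nat \<Rightarrow> nat \<Rightarrow> int \<Rightarrow> int" where
  "dd n l k = (k - 1) mod (int n * int l) div int n + 1"

definition mm :: "nat \<Rightarrow> nat \<Rightarrow> int \<Rightarrow> int" where
  "mm n l k = (k - 1) div (int n * int l)"

definition phi :: "nat \<Rightarrow> nat \<Rightarrow> int \<Rightarrow> int" where
  "phi n l k = cc n l k + int n * mm n l k"

text \<open>l-multipartitions: lists of length l; component b (1 \<le> b \<le> l) is entry b-1.\<close>
definition Pi_multi :: "nat \<Rightarrow> nat \<Rightarrow> nat list list set" where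
  "Pi_multi l m = {lams. length lams = l \<and> (\<forall>x\<in>set lams. is_partition x) \<and>
                        sum_list (map sum_list lams) = m}"

text \<open>Charges: ss is the list (s_1,...,s_l), s = sum_list ss.\<close>
definition corresp :: "nat \<Rightarrow> nat \<Rightarrow> int list \<Rightarrow> nat list list \<Rightarrow> nat list \<Rightarrow> bool" where
  "corresp n l ss lams lam \<longleftrightarrow>
     {(int (partI (lams ! (b - 1)) i) + ss ! (b - 1) + 1 - int i, int b) | b i.
         1 \<le> b \<and> b \<le> l \<and> 1 \<le> i}
   = {(phi n l k, dd n l k) | k. k \<in> {int (partI lam i) + sum_list ss + 1 - int i | i. 1 \<le> i}}"

definition beta :: "int \<Rightarrow> nat list \<Rightarrow> int list" where
  "beta s lam = map (\<lambda>i. int (partI lam i) + s + 1 - int i) [1..<sum_list lam + 1]"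

definition Bset :: "int \<Rightarrow> nat list \<Rightarrow> int set" where
  "Bset s lam = set (beta s lam)"

definition condH :: "nat \<Rightarrow> nat \<Rightarrow> int list \<Rightarrow> nat list list \<Rightarrow> nat list list
                      \<Rightarrow> nat list \<Rightarrow> nat list \<Rightarrow> bool" where
  "condH n l ss lams mus lam mu \<longleftrightarrow>
     corresp n l ss lams lam \<and> corresp n l ss mus mu \<and> dominance_lt lam mu \<and>
     sum_list lam = sum_list mu \<and>
     int (card (Bset (sum_list ss) lam \<inter> Bset (sum_list ss) mu)) = int (sum_list mu) - 2"

definition condJ1 :: "nat \<Rightarrow> nat list list \<Rightarrow> nat list list \<Rightarrow> nat \<Rightarrow> nat
                       \<Rightarrow> (nat \<times> nat) set \<Rightarrow> (nat \<times> nat) set \<Rightarrow> bool" where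
  "condJ1 l lams mus d d' rho rho' \<longleftrightarrow>
     lams \<noteq> mus \<and> d \<noteq> d' \<and> 1 \<le> d \<and> d \<le> l \<and> 1 \<le> d' \<and> d' \<le> l \<and>
     diagram (mus ! (d - 1)) \<subseteq> diagram (lams ! (d - 1)) \<and>
     diagram (lams ! (d' - 1)) \<subseteq> diagram (mus ! (d' - 1)) \<and>
     (\<forall>b. 1 \<le> b \<and> b \<le> l \<and> b \<noteq> d \<and> b \<noteq> d' \<longrightarrow> lams ! (b - 1) = mus ! (b - 1)) \<and>
     rho = diagram (lams ! (d - 1)) - diagram (mus ! (d - 1)) \<and>
     rho' = diagram (mus ! (d' - 1)) - diagram (lams ! (d' - 1)) \<and>
     ribbon rho \<and> ribbon rho' \<and> card rho = card rho'"

definition condJ2 :: "nat \<Rightarrow> nat list list \<Rightarrow> nat list list \<Rightarrow> nat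
                       \<Rightarrow> (nat \<times> nat) set \<Rightarrow> (nat \<times> nat) set \<Rightarrow> bool" where
  "condJ2 l lams mus d rho rho' \<longleftrightarrow>
     lams \<noteq> mus \<and> 1 \<le> d \<and> d \<le> l \<and>
     (\<forall>b. 1 \<le> b \<and> b \<le> l \<and> b \<noteq> d \<longrightarrow> lams ! (b - 1) = mus ! (b - 1)) \<and>
     rho = diagram (lams ! (d - 1)) - (diagram (lams ! (d - 1)) \<inter> diagram (mus ! (d - 1))) \<and>
     rho' = diagram (mus ! (d - 1)) - (diagram (lams ! (d - 1)) \<inter> diagram (mus ! (d - 1))) \<and>
     ribbon rho \<and> ribbon rho' \<and> card rho = card rho'"

definition rho_pair :: "nat \<Rightarrow> nat list list \<Rightarrow> nat list list
                         \<Rightarrow> (nat \<times> nat) set \<Rightarrow> (nat \<times> nat) set \<Rightarrow> bool" where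
  "rho_pair l lams mus rho rho' \<longleftrightarrow>
     (\<exists>d d'. condJ1 l lams mus d d' rho rho') \<or> (\<exists>d. condJ2 l lams mus d rho rho')"

definition hH :: "nat list \<Rightarrow> nat list \<Rightarrow> int" where
  "hH lam mu = int (card (diagram lam - (diagram lam \<inter> diagram mu)))"

definition xrow :: "nat list \<Rightarrow> nat list \<Rightarrow> nat" where
  "xrow lam mu = fst (head (diagram lam - (diagram lam \<inter> diagram mu)))"

definition yrow :: "nat list \<Rightarrow> nat list \<Rightarrow> nat" where
  "yrow lam mu = fst (tail (diagram mu - (diagram lam \<inter> diagram mu)))"

definition betaI :: "int \<Rightarrow> nat list \<Rightarrow> nat \<Rightarrow> int" where
  "betaI s mu i = beta s mu ! (i - 1)"

definition gammaH :: "nat \<Rightarrow> nat \<Rightarrow> int \<Rightarrow> nat list \<Rightarrow> nat list \<Rightarrow> int" where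
  "gammaH n l s lam mu =
     (cc n l (betaI s mu (yrow lam mu)) - cc n l (betaI s mu (xrow lam mu))) mod (int n * int l)"

definition deltaH :: "nat \<Rightarrow> nat \<Rightarrow> int \<Rightarrow> nat list \<Rightarrow> nat list \<Rightarrow> int" where
  "deltaH n l s lam mu =
     (int n * (dd n l (betaI s mu (yrow lam mu)) - dd n l (betaI s mu (xrow lam mu)))) mod (int n * int l)"

definition neg1pow :: "int \<Rightarrow> int" where
  "neg1pow z = (if even z then 1 else -1)"

definition kappa :: "int list \<Rightarrow> nat" where
  "kappa a = card {(i, j). i < j \<and> j < length a \<and> a ! i = a ! j}"

text \<open>sigma.(k_1,...,k_r) = (k_{sigma^{-1}(1)},...), indices 0-based, sigma permutes {0..<r}.\<close>
definition perm_act :: "(nat \<Rightarrow> nat) \<Rightarrow> 'a list \<Rightarrow> 'a list" where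
  "perm_act \<sigma> a = map (\<lambda>i. a ! (inv \<sigma> i)) [0..<length a]"

definition coxeter_length :: "(nat \<Rightarrow> nat) \<Rightarrow> nat \<Rightarrow> nat" where
  "coxeter_length \<sigma> r = card {(i, j). i < j \<and> j < r \<and> \<sigma> j < \<sigma> i}"

text \<open>Length of v(a): the minimal length of sigma with a = sigma.b,
  b the weakly decreasing rearrangement of a.\<close>
definition v_length :: "int list \<Rightarrow> nat" where
  "v_length a = Min {coxeter_length \<sigma> (length a) | \<sigma>.
      \<sigma> permutes {..<length a} \<and> a = perm_act \<sigma> (rev (sort a))}"

definition eps_LM :: "nat \<Rightarrow> nat \<Rightarrow> int \<Rightarrow> nat list \<Rightarrow> nat list \<Rightarrow> int" where
  "eps_LM n l s lam mu =
     neg1pow (int (kappa (map (dd n l) (beta s mu)))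
              + int (v_length (map (dd n l) (rev (beta s mu))))
              + int (v_length (map (dd n l) (beta s lam))))"

section \<open>Straightening coefficients (Uglov)\<close>

text \<open>Contribution of one of the sums: over i \<ge> i0 such that
  (a,b) = (k2 - e - nli, k1 + e + nli) and the wedge is ordered (a > b).\<close>
definition sum_term :: "nat \<Rightarrow> nat \<Rightarrow> int \<Rightarrow> int \<Rightarrow> int \<Rightarrow> nat \<Rightarrow> (nat \<Rightarrow> real)
                          \<Rightarrow> int \<Rightarrow> int \<Rightarrow> real" where
  "sum_term n l k1 k2 e i0 f a b =
     (\<Sum>i\<in>{i. i0 \<le> i \<and> a = k2 - e - int n * int l * int i \<and>
                b = k1 + e + int n * int l * int i \<and> a > b}. f i)"

text \<open>Coefficient (evaluated at q) of v_a \<and> v_b in the straightening of v_k1 \<and> v_k2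
  (k1 \<le> k2) by the applicable rule (R1)-(R4).\<close>
definition straight_coeff :: "nat \<Rightarrow> nat \<Rightarrow> int \<Rightarrow> int \<Rightarrow> int \<Rightarrow> int \<Rightarrow> real \<Rightarrow> real" where
  "straight_coeff n l k1 k2 a b q =
    (let N = int n * int l;
         g = (cc n l k2 - cc n l k1) mod N;
         e = (int n * (dd n l k2 - dd n l k1)) mod N;
         main = (\<lambda>c. if (a, b) = (k2, k1) then c else 0);
         T = (\<lambda>sh i0 f. sum_term n l k1 k2 sh i0 f a b);
         D = q + inverse q
     in if g = 0 \<and> e = 0 then main (-1)
        else if e = 0 then
          main (- inverse q)
          - (q powi (-2) - 1) * T 0 1 (\<lambda>i. q powi (- 2 * int i + 1))
          + (q powi (-2) - 1) * T g 0 (\<lambda>i. q powi (- 2 * int i))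
        else if g = 0 then
          main (- q)
          - (q ^ 2 - 1) * T 0 1 (\<lambda>i. q powi (2 * int i - 1))
          + (q ^ 2 - 1) * T e 0 (\<lambda>i. q powi (2 * int i))
        else
          main (-1)
          - (q - inverse q) * T 0 1 (\<lambda>i. (q powi (2 * int i) - q powi (- 2 * int i)) / D)
          - (q - inverse q) * T g 0 (\<lambda>i. (q powi (2 * int i + 1) + q powi (- 2 * int i - 1)) / D)
          + (q - inverse q) * T e 0 (\<lambda>i. (q powi (2 * int i + 1) + q powi (- 2 * int i - 1)) / D)
          + (q - inverse q) * T (g + e) 0 (\<lambda>i. (q powi (2 * int i + 2) - q powi (- 2 * int i - 2)) / D))"

text \<open>Nonzero coefficient in C(q): the rational function is not identically zero,
  i.e. it is nonzero at some q > 0 (where all denominators are nonzero).\<close>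
definition nonzero_coeff :: "nat \<Rightarrow> nat \<Rightarrow> int \<Rightarrow> int \<Rightarrow> int \<Rightarrow> int \<Rightarrow> bool" where
  "nonzero_coeff n l k1 k2 a b \<longleftrightarrow> (\<exists>q::real. q > 0 \<and> straight_coeff n l k1 k2 a b q \<noteq> 0)"

text \<open>v_ks \<rightarrow> v_ls (0-based position i, i+1).\<close>
definition wstep :: "nat \<Rightarrow> nat \<Rightarrow> int list \<Rightarrow> int list \<Rightarrow> bool" where
  "wstep n l ks ls \<longleftrightarrow> length ls = length ks \<and>
     (\<exists>i. i + 1 < length ks \<and> ks ! i \<le> ks ! (i + 1) \<and>
          (\<forall>j<i. ks ! j > ks ! (j + 1)) \<and>
          (\<forall>j<length ks. j \<noteq> i \<and> j \<noteq> i + 1 \<longrightarrow> ls ! j = ks ! j) \<and>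
          nonzero_coeff n l (ks ! i) (ks ! (i + 1)) (ls ! i) (ls ! (i + 1)))"

text \<open>The m-value of a step (the position i is the first non-descent of ks).\<close>
definition step_m :: "int list \<Rightarrow> int list \<Rightarrow> nat" where
  "step_m ks ls = (let i = (LEAST i. ks ! i \<le> ks ! (i + 1)) in
     if (ls ! i, ls ! (i + 1)) = (ks ! (i + 1), ks ! i) then 0 else 1)"

text \<open>A good sequence [k_0, ..., k_N] for (lambda, mu); its length is N.\<close>
definition good_seq :: "nat \<Rightarrow> nat \<Rightarrow> int \<Rightarrow> nat list \<Rightarrow> nat list \<Rightarrow> int list list \<Rightarrow> bool" where
  "good_seq n l s lam mu kss \<longleftrightarrow> kss \<noteq> [] \<and>
     hd kss = rev (beta s mu) \<and> last kss = beta s lam \<and>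
     (\<forall>t. t + 1 < length kss \<longrightarrow> wstep n l (kss ! t) (kss ! (t + 1))) \<and>
     (\<Sum>t<length kss - 1. step_m (kss ! t) (kss ! (t + 1))) = 1"

end

theory Submission
  imports Defs
begin

definition bd :: "int \<Rightarrow> nat list \<Rightarrow> nat \<Rightarrow> int" where
  "bd c p i = int (partI p i) + c + 1 - int i"

definition NN :: "int \<Rightarrow> nat list \<Rightarrow> int \<Rightarrow> nat" where
  "NN c p t = card {i. 1 \<le> i \<and> t \<le> bd c p i}"

definition Binf :: "int \<Rightarrow> nat list \<Rightarrow> int set" where
  "Binf c p = {bd c p i | i. 1 \<le> i}"

lemma partI_mono:
  assumes "is_partition p" "1 \<le> i" "i \<le> j"
  shows "partI p j \<le> partI p i"
proof (cases "j \<le> length p")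
  case True
  then have "p ! (i - 1) \<ge> p ! (j - 1)"
    using assms unfolding is_partition_def
    by (cases "i = j") (auto simp: sorted_wrt_iff_nth_less)
  then show ?thesis using True assms by (simp add: partI_def)
next
  case False
  then show ?thesis by (simp add: partI_def)
qed

lemma bd_strict:
  assumes "is_partition p" "1 \<le> i" "i < j"
  shows "bd c p j < bd c p i"
  using partI_mono[OF assms(1,2), of j] assms(3) by (simp add: bd_def)

lemma bd_mono:
  assumes "is_partition p" "1 \<le> i" "i \<le> j"
  shows "bd c p j \<le> bd c p i"
  using partI_mono[OF assms(1,2), of j] assms(3) by (simp add: bd_def)

lemma bd_large: "length p < i \<Longrightarrow> bd c p i = c + 1 - int i"
  by (simp add: bd_def partI_def)

lemma downset_eq:
  assumes "finite A" "\<forall>i\<in>A. (1::nat) \<le> i" "\<And>i j. 1 \<le> i \<Longrightarrow> i \<le> j \<Longrightarrow> j \<in> A \<Longrightarrow> i \<in> A"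
  shows "A = {1..card A}"
proof (cases "A = {}")
  case True then show ?thesis by simp
next
  case False
  have "A = {1..Max A}"
  proof
    show "A \<subseteq> {1..Max A}" using assms(1,2) by auto
    show "{1..Max A} \<subseteq> A" using assms(3) Max_in[OF assms(1) False] by auto
  qed
  then show ?thesis by (metis card_atLeastAtMost diff_Suc_1)
qed

lemma finite_ge:
  "finite {i. 1 \<le> i \<and> t \<le> bd c p i}"
proof -
  have "{i. 1 \<le> i \<and> t \<le> bd c p i} \<subseteq> {..max (length p) (nat (c + 1 - t))}"
  proof
    fix i assume "i \<in> {i. 1 \<le> i \<and> t \<le> bd c p i}"
    then have "1 \<le> i" "t \<le> bd c p i" by auto
    show "i \<in> {..max (length p) (nat (c + 1 - t))}"
    proof (cases "length p < i")
      case True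
      then have "t \<le> c + 1 - int i" using bd_large \<open>t \<le> bd c p i\<close> by metis
      then show ?thesis by auto
    qed auto
  qed
  then show ?thesis using finite_subset by blast
qed

lemma NN_set:
  assumes "is_partition p"
  shows "{i. 1 \<le> i \<and> t \<le> bd c p i} = {1..NN c p t}"
  unfolding NN_def
proof (rule downset_eq[OF finite_ge])
  fix i j :: nat assume "1 \<le> i" "i \<le> j" "j \<in> {i. 1 \<le> i \<and> t \<le> bd c p i}"
  then show "i \<in> {i. 1 \<le> i \<and> t \<le> bd c p i}"
    using bd_mono[OF assms, of i j c] by auto
qed auto

lemma NN_iff:
  assumes "is_partition p" "1 \<le> i"
  shows "t \<le> bd c p i \<longleftrightarrow> i \<le> NN c p t"
proof -
  have "i \<in> {i. 1 \<le> i \<and> t \<le> bd c p i} \<longleftrightarrow> i \<in> {1..NN c p t}"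
    using NN_set[OF assms(1)] by simp
  then show ?thesis using assms(2) by auto
qed


lemma bd_inj:
  assumes "is_partition p"
  shows "inj_on (bd c p) {i. 1 \<le> i}"
proof (rule inj_onI)
  fix i j assume "i \<in> {i. 1 \<le> i}" "j \<in> {i. 1 \<le> i}" "bd c p i = bd c p j"
  then show "i = j" using bd_strict[OF assms, of i j c] bd_strict[OF assms, of j i c]
    by (cases i j rule: linorder_cases) auto
qed

lemma NN_Binf:
  assumes "is_partition p"
  shows "NN c p t = card {x \<in> Binf c p. t \<le> x}"
proof -
  have "{x \<in> Binf c p. t \<le> x} = bd c p ` {i. 1 \<le> i \<and> t \<le> bd c p i}"
    unfolding Binf_def by auto
  moreover have "inj_on (bd c p) {i. 1 \<le> i \<and> t \<le> bd c p i}"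
    using bd_inj[OF assms] by (rule inj_on_subset) auto
  ultimately show ?thesis unfolding NN_def by (simp add: card_image)
qed

lemma bd_NN:
  assumes "is_partition p" "x \<in> Binf c p"
  shows "bd c p (NN c p x) = x" "1 \<le> NN c p x"
proof -
  obtain i where i: "1 \<le> i" "x = bd c p i" using assms(2) unfolding Binf_def by auto
  have "i \<le> NN c p x" using NN_iff[OF assms(1) i(1), of x c] i by simp
  moreover have "\<not> Suc i \<le> NN c p x"
    using NN_iff[OF assms(1), of "Suc i" x c] bd_strict[OF assms(1) i(1), of "Suc i" c] i by auto
  ultimately have "NN c p x = i" by simp
  then show "bd c p (NN c p x) = x" "1 \<le> NN c p x" using i by auto
qed

lemma mem_diff:
  assumes "is_partition f" "is_partition g"
  shows "(i, j) \<in> diagram g - diagram f \<longleftrightarrow>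
     1 \<le> i \<and> NN c f (int j + c + 1 - int i) < i \<and> i \<le> NN c g (int j + c + 1 - int i)"
proof -
  have A: "1 \<le> i \<Longrightarrow> (j \<le> partI q i \<longleftrightarrow> i \<le> NN c q (int j + c + 1 - int i))"
    if "is_partition q" for q
    using NN_iff[OF that, of i "int j + c + 1 - int i" c] by (auto simp: bd_def)
  show ?thesis
    unfolding diagram_def using A[OF assms(1)] A[OF assms(2)] by auto
qed

lemma headtail:
  assumes f: "is_partition f" and g: "is_partition g" and pp: "p < p'"
    and H1: "\<And>t. NN c f t < NN c g t \<longleftrightarrow> p < t \<and> t \<le> p'"
    and H2: "\<And>t. p < t \<Longrightarrow> t \<le> p' \<Longrightarrow> NN c g t = NN c f t + 1"
  shows "fst (head (diagram g - diagram f)) = NN c g (p + 1)"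
    "fst (tail (diagram g - diagram f)) = NN c g p'"
    "card (diagram g - diagram f) = nat (p' - p)"
proof -
  define S where "S = diagram g - diagram f"
  define node where "node t = (NN c g t, nat (t - c - 1 + int (NN c g t)))" for t
  have jpos: "0 < t - c - 1 + int (NN c g t)" if "p < t" "t \<le> p'" for t
  proof -
    have "NN c f t < NN c g t" using H1 that by auto
    then have "\<not> t \<le> bd c f (NN c g t)" using NN_iff[OF f, of "NN c g t" t c] by auto
    then show ?thesis by (simp add: bd_def)
  qed
  have nodeS: "node t \<in> S" if "p < t" "t \<le> p'" for t
  proof -
    have e: "int (nat (t - c - 1 + int (NN c g t))) + c + 1 - int (NN c g t) = t"
      using jpos[OF that] by simp
    have "NN c f t < NN c g t" using H1 that by auto
    then show ?thesis unfolding S_def node_def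
      using mem_diff[OF f g, of "NN c g t" "nat (t - c - 1 + int (NN c g t))" c] e by simp
  qed
  have Snode: "\<exists>t. p < t \<and> t \<le> p' \<and> q = node t" if "q \<in> S" for q
  proof -
    obtain i j where q: "q = (i, j)" by force
    define t where "t = int j + c + 1 - int i"
    have m: "1 \<le> i" "NN c f t < i" "i \<le> NN c g t"
      using that mem_diff[OF f g, of i j c] unfolding S_def q t_def by auto
    then have tt: "p < t" "t \<le> p'" using H1[of t] by auto
    then have "i = NN c g t" using H2[OF tt] m by auto
    then have "q = node t" unfolding node_def q t_def by auto
    then show ?thesis using tt by auto
  qed
  have cont: "content (node t) = t - c - 1" if "p < t" "t \<le> p'" for t
    using jpos[OF that] unfolding node_def content_def by simp
  have Seq: "S = node ` {p<..p'}"
  proof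
    show "S \<subseteq> node ` {p<..p'}"
    proof
      fix q assume "q \<in> S"
      then obtain t where "p < t" "t \<le> p'" "q = node t" using Snode by blast
      then show "q \<in> node ` {p<..p'}" by auto
    qed
    show "node ` {p<..p'} \<subseteq> S" using nodeS by auto
  qed
  have inj: "inj_on node {p<..p'}"
  proof (rule inj_onI)
    fix t t' assume a: "t \<in> {p<..p'}" "t' \<in> {p<..p'}" "node t = node t'"
    have "content (node t) = content (node t')" using a(3) by simp
    moreover have "content (node t) = t - c - 1" using a(1) cont by simp
    moreover have "content (node t') = t' - c - 1" using a(2) cont by simp
    ultimately show "t = t'" by simp
  qed
  show "card S = nat (p' - p)" using Seq card_image[OF inj] by simp
  have "head S = node (p + 1)"
    unfolding head_def
  proof (rule the_equality)
    have "content (node (p + 1)) \<le> content q" if qS: "q \<in> S" for q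
    proof -
      obtain t where t: "p < t" "t \<le> p'" "q = node t" using Snode[OF qS] by blast
      show ?thesis using cont[OF t(1,2)] cont[of "p+1"] t pp by simp
    qed
    then show "node (p + 1) \<in> S \<and> (\<forall>q\<in>S. content (node (p + 1)) \<le> content q)"
      using nodeS[of "p+1"] pp by simp
    fix q assume q: "q \<in> S \<and> (\<forall>q'\<in>S. content q \<le> content q')"
    then obtain t where t: "p < t" "t \<le> p'" "q = node t" using Snode by blast
    then have "content q \<le> content (node (p + 1))" using q nodeS[of "p+1"] pp by auto
    then have "t = p + 1" using cont[OF t(1,2)] cont[of "p+1"] t pp by simp
    then show "q = node (p + 1)" using t by simp
  qed
  then show "fst (head S) = NN c g (p + 1)" unfolding node_def by simp
  have "tail S = node p'"
    unfolding tail_def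
  proof (rule the_equality)
    have "content q \<le> content (node p')" if qS: "q \<in> S" for q
    proof -
      obtain t where t: "p < t" "t \<le> p'" "q = node t" using Snode[OF qS] by blast
      show ?thesis using cont[OF t(1,2)] cont[of "p'"] t pp by simp
    qed
    then show "node p' \<in> S \<and> (\<forall>q\<in>S. content q \<le> content (node p'))"
      using nodeS[of "p'"] pp by simp
    fix q assume q: "q \<in> S \<and> (\<forall>q'\<in>S. content q' \<le> content q)"
    then obtain t where t: "p < t" "t \<le> p'" "q = node t" using Snode by blast
    then have "content (node p') \<le> content q" using q nodeS[of "p'"] pp by auto
    then have "t = p'" using cont[OF t(1,2)] cont[of "p'"] t pp by simp
    then show "q = node p'" using t by simp
  qed
  then show "fst (tail S) = NN c g p'" unfolding node_def by simp
qed

definition asc :: "'a::linorder list \<Rightarrow> nat" where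
  "asc a = card {(i, j). i < j \<and> j < length a \<and> a ! i < a ! j}"

definition PR :: "nat \<Rightarrow> nat" where
  "PR r = card {(i, j). i < j \<and> j < (r::nat)}"

lemma finite_pairs: "finite {(i, j). i < j \<and> j < (r::nat) \<and> P i j}"
  by (rule finite_subset[of _ "{..<r} \<times> {..<r}"]) auto

lemma perm_act_nth:
  "i < length b \<Longrightarrow> perm_act \<sigma> b ! i = b ! (inv \<sigma> i)"
  by (simp add: perm_act_def)

lemma sorted_rev_sort: "sorted_wrt (\<ge>) (rev (sort (a::'a::linorder list)))"
  by (simp add: sorted_wrt_rev)

lemma cox_ge:
  fixes a :: "'a::linorder list"
  assumes sp: "\<sigma> permutes {..<length a}" and ae: "a = perm_act \<sigma> (rev (sort a))"
  shows "asc a \<le> coxeter_length \<sigma> (length a)"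
proof -
  define r where "r = length a"
  define b where "b = rev (sort a)"
  have lb: "length b = r" by (simp add: b_def r_def)
  have an: "a ! i = b ! (inv \<sigma> i)" if "i < r" for i
    using perm_act_nth[of i b \<sigma>] that lb ae b_def by metis
  have bs: "b ! x \<ge> b ! y" if "x < y" "y < r" for x y
    using sorted_rev_sort[of a, unfolded sorted_wrt_iff_nth_less] that lb b_def by auto
  have isp: "inv \<sigma> permutes {..<r}" using permutes_inv[OF sp] r_def by simp
  have inr: "inv \<sigma> i < r" if "i < r" for i
    using permutes_in_image[OF isp] that by auto
  define f where "f = (\<lambda>(i::nat, j::nat). (inv \<sigma> j, inv \<sigma> i))"
  have inj1: "inj_on f {(i, j). i < j \<and> j < length a \<and> a ! i < a ! j}"
    unfolding f_def inj_on_def using permutes_inj[OF isp] by (auto dest: injD)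
  have sub1: "f ` {(i, j). i < j \<and> j < length a \<and> a ! i < a ! j}
      \<subseteq> {(i, j). i < j \<and> j < length a \<and> \<sigma> j < \<sigma> i}"
  proof
    fix q assume "q \<in> f ` {(i, j). i < j \<and> j < length a \<and> a ! i < a ! j}"
    then obtain i j where ij: "i < j" "j < r" "a ! i < a ! j" "q = (inv \<sigma> j, inv \<sigma> i)"
      unfolding f_def r_def by auto
    have ir: "i < r" using ij by simp
    have ne: "inv \<sigma> i \<noteq> inv \<sigma> j" using ij permutes_inj[OF isp] by (metis injD less_irrefl)
    have "\<not> inv \<sigma> i < inv \<sigma> j"
      using bs[of "inv \<sigma> i" "inv \<sigma> j"] inr[OF ij(2)] an[OF ir] an[OF ij(2)] ij(3) by auto
    then have lt: "inv \<sigma> j < inv \<sigma> i" using ne by simp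
    show "q \<in> {(i, j). i < j \<and> j < length a \<and> \<sigma> j < \<sigma> i}"
      using lt inr[OF ir] ij permutes_inverses(1)[OF sp, of i] permutes_inverses(1)[OF sp, of j]
      unfolding r_def by auto
  qed
  have "card {(i, j). i < j \<and> j < length a \<and> a ! i < a ! j}
      \<le> card {(i, j). i < j \<and> j < length a \<and> \<sigma> j < \<sigma> i}"
    by (rule card_inj_on_le[OF inj1 sub1 finite_pairs])
  then show ?thesis unfolding asc_def coxeter_length_def .
qed

definition bef :: "'a::linorder list \<Rightarrow> nat \<Rightarrow> nat \<Rightarrow> bool" where
  "bef a j i \<longleftrightarrow> a ! j > a ! i \<or> (a ! j = a ! i \<and> j < i)"

definition rk :: "'a::linorder list \<Rightarrow> nat \<Rightarrow> nat" where
  "rk a i = card {j. j < length a \<and> bef a j i}"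

lemma bef_trans: "bef a x y \<Longrightarrow> bef a y z \<Longrightarrow> bef a x z"
  unfolding bef_def by auto

lemma bef_total: "i \<noteq> j \<Longrightarrow> bef a i j \<or> bef a j i"
  unfolding bef_def by auto

lemma bef_irrefl: "\<not> bef a i i" unfolding bef_def by auto

lemma bef_asym: "bef a i j \<Longrightarrow> \<not> bef a j i" unfolding bef_def by auto

lemma rk_lt: "i < length a \<Longrightarrow> rk a i < length a"
proof -
  assume i: "i < length a"
  have "{j. j < length a \<and> bef a j i} \<subseteq> {..<length a} - {i}" using bef_irrefl by auto
  then have "rk a i \<le> card ({..<length a} - {i})" unfolding rk_def by (intro card_mono) auto
  then show ?thesis using i by simp
qed

lemma rk_mono: "i < length a \<Longrightarrow> j < length a \<Longrightarrow> bef a j i \<Longrightarrow> rk a j < rk a i"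
proof -
  assume a: "i < length a" "j < length a" "bef a j i"
  have "{x. x < length a \<and> bef a x j} \<subset> {x. x < length a \<and> bef a x i}"
    using a bef_trans bef_irrefl by blast
  then show ?thesis unfolding rk_def by (intro psubset_card_mono) auto
qed

lemma rk_lt_iff: "i < length a \<Longrightarrow> j < length a \<Longrightarrow> rk a j < rk a i \<longleftrightarrow> bef a j i"
  by (metis bef_total bef_irrefl rk_mono less_asym less_irrefl)

lemma exists_sigma:
  fixes a :: "'a::linorder list"
  shows "\<exists>\<sigma>. \<sigma> permutes {..<length a} \<and> a = perm_act \<sigma> (rev (sort a)) \<and>
           coxeter_length \<sigma> (length a) \<le> asc a"
proof -
  define r where "r = length a"
  define pp where "pp x = (if x < r then rk a x else x)" for x
  have inj: "inj_on pp {..<r}"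
  proof (rule inj_onI)
    fix x y assume "x \<in> {..<r}" "y \<in> {..<r}" "pp x = pp y"
    then show "x = y" unfolding pp_def r_def using rk_lt_iff bef_total by (metis lessThan_iff less_irrefl)
  qed
  have img: "pp ` {..<r} \<subseteq> {..<r}" unfolding pp_def r_def using rk_lt by auto
  have "pp ` {..<r} = {..<r}" using endo_inj_surj[OF _ img inj] by simp
  then have "bij_betw pp {..<r} {..<r}" using inj by (simp add: bij_betw_def)
  then have ppp: "pp permutes {..<r}" by (rule bij_imp_permutes) (simp add: pp_def)
  define \<sigma> where "\<sigma> = inv pp"
  have sp: "\<sigma> permutes {..<r}" unfolding \<sigma>_def using permutes_inv[OF ppp] .
  have isig: "inv \<sigma> = pp" unfolding \<sigma>_def using permutes_inv_inv[OF ppp] .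
  define b where "b = permute_list \<sigma> a"
  have lb: "length b = r" by (simp add: b_def r_def)
  have bn: "b ! k = a ! (\<sigma> k)" if "k < r" for k
    using permute_list_nth[of \<sigma> a k] sp that unfolding b_def r_def by simp
  have ms: "mset b = mset a" unfolding b_def using sp r_def by simp
  have srt: "sorted_wrt (\<ge>) b"
    unfolding sorted_wrt_iff_nth_less
  proof (intro allI impI)
    fix k k' assume kk: "k < k'" "k' < length b"
    define i where "i = \<sigma> k"
    define i' where "i' = \<sigma> k'"
    have ir: "i < r" "i' < r" using kk lb permutes_in_image[OF sp] unfolding i_def i'_def by auto
    have "pp i = k" "pp i' = k'" unfolding i_def i'_def \<sigma>_def
      using permutes_inverses(1)[OF ppp] by auto
    then have "rk a i = k" "rk a i' = k'" using ir unfolding pp_def by auto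
    then have "\<not> bef a i' i" using rk_lt_iff[of i a i'] ir kk r_def by auto
    then show "b ! k' \<le> b ! k" using bn kk lb ir unfolding bef_def i_def i'_def by auto
  qed
  have "sort a = rev b"
    using properties_for_sort[of "rev b" a] ms srt by (simp add: sorted_wrt_rev)
  then have rb: "rev (sort a) = b" by simp
  have "perm_act \<sigma> (rev (sort a)) = a"
  proof (rule nth_equalityI)
    show "length (perm_act \<sigma> (rev (sort a))) = length a" by (simp add: perm_act_def)
    fix i assume "i < length (perm_act \<sigma> (rev (sort a)))"
    then have i: "i < r" by (simp add: perm_act_def r_def)
    have "pp i < r" using img i by auto
    then show "perm_act \<sigma> (rev (sort a)) ! i = a ! i"
      using perm_act_nth[of i b \<sigma>] i lb rb isig bn[of "pp i"]
        permutes_inverses(2)[OF ppp, of i] \<sigma>_def by simp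
  qed
  moreover have "coxeter_length \<sigma> r \<le> asc a"
  proof -
    define f where "f = (\<lambda>(x::nat, y::nat). (\<sigma> y, \<sigma> x))"
    have inj2: "inj_on f {(i, j). i < j \<and> j < r \<and> \<sigma> j < \<sigma> i}"
      unfolding f_def inj_on_def using permutes_inj[OF sp] by (auto dest: injD)
    have sub2: "f ` {(i, j). i < j \<and> j < r \<and> \<sigma> j < \<sigma> i}
        \<subseteq> {(i, j). i < j \<and> j < length a \<and> a ! i < a ! j}"
    proof
      fix q assume "q \<in> f ` {(i, j). i < j \<and> j < r \<and> \<sigma> j < \<sigma> i}"
      then obtain x y where xy: "x < y" "y < r" "\<sigma> y < \<sigma> x" "q = (\<sigma> y, \<sigma> x)"
        unfolding f_def by auto
      have xr: "\<sigma> x < r" "\<sigma> y < r" using xy permutes_in_image[OF sp] by auto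
      have "pp (\<sigma> x) = x" "pp (\<sigma> y) = y" unfolding \<sigma>_def
        using permutes_inverses(1)[OF ppp] by auto
      then have "rk a (\<sigma> x) < rk a (\<sigma> y)" using xr xy unfolding pp_def by auto
      then have "bef a (\<sigma> x) (\<sigma> y)" using rk_lt_iff xr r_def by blast
      then have "a ! (\<sigma> y) < a ! (\<sigma> x)" using xy(3) unfolding bef_def by auto
      then show "q \<in> {(i, j). i < j \<and> j < length a \<and> a ! i < a ! j}"
        using xy xr r_def by auto
    qed
    have "card {(i, j). i < j \<and> j < r \<and> \<sigma> j < \<sigma> i}
      \<le> card {(i, j). i < j \<and> j < length a \<and> a ! i < a ! j}"
      by (rule card_inj_on_le[OF inj2 sub2 finite_pairs])
    then show ?thesis unfolding asc_def coxeter_length_def .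
  qed
  ultimately show ?thesis using sp r_def by auto
qed

lemma v_length_asc: "v_length (a :: int list) = asc a"
proof -
  define S where "S = {coxeter_length \<sigma> (length a) | \<sigma>.
      \<sigma> permutes {..<length a} \<and> a = perm_act \<sigma> (rev (sort a))}"
  obtain \<sigma> where s: "\<sigma> permutes {..<length a}" "a = perm_act \<sigma> (rev (sort a))"
      "coxeter_length \<sigma> (length a) \<le> asc a"
    using exists_sigma by blast
  have eq: "coxeter_length \<sigma> (length a) = asc a" using s cox_ge by (metis le_antisym)
  have inS: "asc a \<in> S" unfolding S_def
    apply (rule CollectI) apply (rule exI[of _ \<sigma>]) using s eq by simp
  have ge: "\<forall>x\<in>S. asc a \<le> x" unfolding S_def using cox_ge by auto
  have "S \<subseteq> {..card ({..<length a} \<times> {..<length a})}"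
  proof
    fix x assume "x \<in> S"
    then obtain \<tau> where "x = coxeter_length \<tau> (length a)" unfolding S_def by auto
    moreover have "coxeter_length \<tau> (length a) \<le> card ({..<length a} \<times> {..<length a})"
      unfolding coxeter_length_def by (rule card_mono) auto
    ultimately show "x \<in> {..card ({..<length a} \<times> {..<length a})}" by simp
  qed
  then have "finite S" using finite_subset by blast
  then have "Min S = asc a" using inS ge by (meson Min_eqI)
  then show ?thesis unfolding v_length_def S_def by simp
qed

lemma asc_rev: "asc (rev a) = card {(i, j). i < j \<and> j < length a \<and> a ! j < a ! i}"
proof -
  define r where "r = length a"
  define f where "f = (\<lambda>(i::nat, j::nat). (r - 1 - j, r - 1 - i))"
  have imgeq: "f ` {(i, j). i < j \<and> j < r \<and> rev a ! i < rev a ! j}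
      = {(i, j). i < j \<and> j < r \<and> a ! j < a ! i}"
  proof
    show "f ` {(i, j). i < j \<and> j < r \<and> rev a ! i < rev a ! j} \<subseteq> {(i, j). i < j \<and> j < r \<and> a ! j < a ! i}"
    proof
      fix q assume "q \<in> f ` {(i, j). i < j \<and> j < r \<and> rev a ! i < rev a ! j}"
      then obtain i j where q: "q = (r - 1 - j, r - 1 - i)" "i < j" "j < r" "rev a ! i < rev a ! j"
        unfolding f_def by auto
      have "rev a ! i = a ! (r - 1 - i)" "rev a ! j = a ! (r - 1 - j)"
        using q rev_nth[of i a] rev_nth[of j a] r_def by auto
      then show "q \<in> {(i, j). i < j \<and> j < r \<and> a ! j < a ! i}" using q by auto
    qed
    show "{(i, j). i < j \<and> j < r \<and> a ! j < a ! i} \<subseteq> f ` {(i, j). i < j \<and> j < r \<and> rev a ! i < rev a ! j}"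
    proof
      fix q assume "q \<in> {(i, j). i < j \<and> j < r \<and> a ! j < a ! i}"
      then obtain i j where q: "q = (i, j)" "i < j" "j < r" "a ! j < a ! i" by auto
      have "(r - 1 - j, r - 1 - i) \<in> {(i, j). i < j \<and> j < r \<and> rev a ! i < rev a ! j}"
        using q r_def by (auto simp: rev_nth Suc_diff_Suc)
      moreover have "f (r - 1 - j, r - 1 - i) = q" using q unfolding f_def by auto
      ultimately show "q \<in> f ` {(i, j). i < j \<and> j < r \<and> rev a ! i < rev a ! j}" by force
    qed
  qed
  have "inj_on f {(i, j). i < j \<and> j < r \<and> rev a ! i < rev a ! j}"
    unfolding f_def inj_on_def by auto
  then have "card (f ` {(i, j). i < j \<and> j < r \<and> rev a ! i < rev a ! j})
     = card {(i, j). i < j \<and> j < r \<and> rev a ! i < rev a ! j}" by (rule card_image)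
  then show ?thesis unfolding asc_def r_def using imgeq r_def by simp
qed

lemma kappa_asc_sum: "kappa a + asc (rev a) + asc a = PR (length a)"
proof -
  define r where "r = length a"
  define A where "A = {(i, j). i < j \<and> j < r \<and> a ! i = a ! j}"
  define B where "B = {(i, j). i < j \<and> j < r \<and> a ! j < a ! i}"
  define C where "C = {(i, j). i < j \<and> j < r \<and> a ! i < a ! j}"
  have fA: "finite A" "finite B" "finite C" unfolding A_def B_def C_def using finite_pairs by auto
  have "A \<union> B \<union> C = {(i, j). i < j \<and> j < r}" unfolding A_def B_def C_def by auto
  moreover have "card (A \<union> B) = card A + card B"
    using fA by (intro card_Un_disjoint) (auto simp: A_def B_def)
  moreover have "card (A \<union> B \<union> C) = card (A \<union> B) + card C"
    using fA by (intro card_Un_disjoint) (auto simp: A_def B_def C_def)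
  ultimately show ?thesis unfolding kappa_def PR_def using asc_rev[of a]
    unfolding A_def B_def C_def asc_def r_def by simp
qed

lemma asc_map_dec:
  fixes xs :: "int list" and f :: "int \<Rightarrow> int"
  assumes "sorted_wrt (>) xs"
  shows "asc (map f xs) = card {(x, y). x \<in> set xs \<and> y \<in> set xs \<and> y < x \<and> f x < f y}"
proof -
  define g where "g = (\<lambda>(i, j). (xs ! i, xs ! j))"
  have mono: "xs ! j < xs ! i" if "i < j" "j < length xs" for i j
    using assms that unfolding sorted_wrt_iff_nth_less by auto
  have imgeq: "g ` {(i, j). i < j \<and> j < length xs \<and> map f xs ! i < map f xs ! j}
       = {(x, y). x \<in> set xs \<and> y \<in> set xs \<and> y < x \<and> f x < f y}"
  proof
    show "g ` {(i, j). i < j \<and> j < length xs \<and> map f xs ! i < map f xs ! j}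
       \<subseteq> {(x, y). x \<in> set xs \<and> y \<in> set xs \<and> y < x \<and> f x < f y}"
    proof
      fix q assume "q \<in> g ` {(i, j). i < j \<and> j < length xs \<and> map f xs ! i < map f xs ! j}"
      then obtain i j where ij: "q = (xs ! i, xs ! j)" "i < j" "j < length xs" "f (xs ! i) < f (xs ! j)"
        unfolding g_def by auto
      then show "q \<in> {(x, y). x \<in> set xs \<and> y \<in> set xs \<and> y < x \<and> f x < f y}"
        using mono[OF ij(2,3)] by simp
    qed
    show "{(x, y). x \<in> set xs \<and> y \<in> set xs \<and> y < x \<and> f x < f y}
       \<subseteq> g ` {(i, j). i < j \<and> j < length xs \<and> map f xs ! i < map f xs ! j}"
    proof
      fix q assume "q \<in> {(x, y). x \<in> set xs \<and> y \<in> set xs \<and> y < x \<and> f x < f y}"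
      then obtain x y where q: "q = (x, y)" "x \<in> set xs" "y \<in> set xs" "y < x" "f x < f y" by auto
      obtain i j where ij: "i < length xs" "j < length xs" "x = xs ! i" "y = xs ! j"
        using q by (auto simp: in_set_conv_nth)
      have "i < j"
      proof (rule ccontr)
        assume "\<not> i < j"
        then consider "j < i" | "j = i" by linarith
        then show False
        proof cases
          case 1 then show False using mono[of j i] ij q by simp
        next
          case 2 then show False using ij q by simp
        qed
      qed
      then show "q \<in> g ` {(i, j). i < j \<and> j < length xs \<and> map f xs ! i < map f xs ! j}"
        using ij q unfolding g_def by force
    qed
  qed
  have injx: "i = i'" if "i < length xs" "i' < length xs" "xs ! i = xs ! i'" for i i'
  proof (rule ccontr)
    assume "i \<noteq> i'"
    then consider "i < i'" | "i' < i" by linarith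
    then show False using mono that by cases force+
  qed
  have "inj_on g {(i, j). i < j \<and> j < length xs \<and> map f xs ! i < map f xs ! j}"
  proof (rule inj_onI)
    fix p q assume pq: "p \<in> {(i, j). i < j \<and> j < length xs \<and> map f xs ! i < map f xs ! j}"
      "q \<in> {(i, j). i < j \<and> j < length xs \<and> map f xs ! i < map f xs ! j}" "g p = g q"
    obtain i j where p: "p = (i, j)" by force
    obtain i' j' where q: "q = (i', j')" by force
    have "i = i'" using injx[of i i'] pq p q unfolding g_def by auto
    moreover have "j = j'" using injx[of j j'] pq p q unfolding g_def by auto
    ultimately show "p = q" using p q by simp
  qed
  then have "card (g ` {(i, j). i < j \<and> j < length xs \<and> map f xs ! i < map f xs ! j})
     = card {(i, j). i < j \<and> j < length xs \<and> map f xs ! i < map f xs ! j}" by (rule card_image)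
  moreover have "card {(i, j). i < j \<and> j < length xs \<and> map f xs ! i < map f xs ! j} = asc (map f xs)"
    unfolding asc_def by simp
  ultimately show ?thesis using imgeq by simp
qed

lemma asc_inc: "sorted_wrt (<) (xs :: int list) \<Longrightarrow> asc xs = PR (length xs)"
  unfolding asc_def PR_def sorted_wrt_iff_nth_less by (rule arg_cong[where f=card]) auto

lemma asc_dec: "sorted_wrt (>) (xs :: int list) \<Longrightarrow> asc xs = 0"
proof -
  assume "sorted_wrt (>) xs"
  then have "{(i, j). i < j \<and> j < length xs \<and> xs ! i < xs ! j} = {}"
    unfolding sorted_wrt_iff_nth_less by (auto dest: less_asym)
  then show ?thesis unfolding asc_def by (simp only: card.empty)
qed

definition ind :: "int list \<Rightarrow> nat \<times> nat \<Rightarrow> int" where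
  "ind zs p = of_bool (zs ! fst p < zs ! snd p)"

definition GG :: "int list \<Rightarrow> int list \<Rightarrow> nat \<Rightarrow> nat \<Rightarrow> int" where
  "GG xs ys i j = (if j < i then
      (ind ys (j, i) - ind xs (j, i)) + (ind ys (j, Suc i) - ind xs (j, Suc i))
    else (ind ys (i, j) - ind xs (i, j)) + (ind ys (Suc i, j) - ind xs (Suc i, j)))"

lemma asc_sum:
  "int (asc zs) = (\<Sum>p\<in>{(x, y). x < y \<and> y < length zs}. ind zs p)"
proof -
  have "{(x, y). x < y \<and> y < length zs} \<inter> {p. zs ! fst p < zs ! snd p}
      = {(i, j). i < j \<and> j < length zs \<and> zs ! i < zs ! j}" by auto
  then show ?thesis unfolding asc_def ind_def
    using finite_pairs[of "length zs" "\<lambda>_ _. True"] by simp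
qed

lemma asc_repl:
  fixes xs ys :: "int list"
  assumes len: "length ys = length xs" and i: "Suc i < length xs"
    and eq: "\<forall>j<length xs. j \<noteq> i \<and> j \<noteq> Suc i \<longrightarrow> ys ! j = xs ! j"
  shows "int (asc ys) - int (asc xs) = (ind ys (i, Suc i) - ind xs (i, Suc i))
           + (\<Sum>j\<in>{..<length xs} - {i, Suc i}. GG xs ys i j)"
proof -
  define r where "r = length xs"
  define PS where "PS = {(x, y). x < y \<and> y < r}"
  define f where "f p = ind ys p - ind xs p" for p
  have fPS: "finite PS" unfolding PS_def using finite_pairs[of r "\<lambda>_ _. True"] by simp
  have "int (asc ys) - int (asc xs) = (\<Sum>p\<in>PS. f p)"
    unfolding asc_sum f_def PS_def r_def using len by (simp add: sum_subtractf)
  define Z where "Z = PS \<inter> {p. fst p \<in> {i, Suc i} \<or> snd p \<in> {i, Suc i}}"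
  have "(\<Sum>p\<in>PS. f p) = (\<Sum>p\<in>Z. f p)"
  proof (rule sum.mono_neutral_right[OF fPS])
    show "Z \<subseteq> PS" unfolding Z_def by auto
    show "\<forall>p\<in>PS - Z. f p = 0"
    proof
      fix p assume "p \<in> PS - Z"
      then obtain x y where p: "p = (x, y)" "x < y" "y < r" "x \<notin> {i, Suc i}" "y \<notin> {i, Suc i}"
        unfolding PS_def Z_def by auto
      then show "f p = 0" using eq unfolding f_def ind_def r_def by auto
    qed
  qed
  define J1 where "J1 = {..<i}"
  define J2 where "J2 = {Suc (Suc i)..<r}"
  define A1 where "A1 = (\<lambda>j. (j, i)) ` J1"
  define A2 where "A2 = (\<lambda>j. (j, Suc i)) ` J1"
  define A3 where "A3 = (\<lambda>j. (i, j)) ` J2"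
  define A4 where "A4 = (\<lambda>j. (Suc i, j)) ` J2"
  have Zeq: "Z = insert (i, Suc i) (A1 \<union> A2 \<union> A3 \<union> A4)"
  proof
    show "Z \<subseteq> insert (i, Suc i) (A1 \<union> A2 \<union> A3 \<union> A4)"
    proof
      fix p assume "p \<in> Z"
      then obtain x y where p: "p = (x, y)" "x < y" "y < r" "x \<in> {i, Suc i} \<or> y \<in> {i, Suc i}"
        unfolding PS_def Z_def by auto
      have "(x = i \<and> y = Suc i) \<or> y = i \<or> (y = Suc i \<and> x < i) \<or> (x = i \<and> Suc (Suc i) \<le> y)
        \<or> x = Suc i" using p by auto
      then consider "x = i" "y = Suc i" | "y = i" | "y = Suc i" "x < i" | "x = i" "Suc (Suc i) \<le> y"
        | "x = Suc i" by blast
      then show "p \<in> insert (i, Suc i) (A1 \<union> A2 \<union> A3 \<union> A4)"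
        by cases (use p in \<open>auto simp: A1_def A2_def A3_def A4_def J1_def J2_def\<close>)
    qed
    show "insert (i, Suc i) (A1 \<union> A2 \<union> A3 \<union> A4) \<subseteq> Z"
      using i unfolding Z_def PS_def A1_def A2_def A3_def A4_def J1_def J2_def r_def by auto
  qed
  have fin: "finite A1" "finite A2" "finite A3" "finite A4"
    unfolding A1_def A2_def A3_def A4_def J1_def J2_def by auto
  have "(\<Sum>p\<in>Z. f p) = f (i, Suc i) + (\<Sum>p\<in>A1 \<union> A2 \<union> A3 \<union> A4. f p)"
    unfolding Zeq using fin by (subst sum.insert) (auto simp: A1_def A2_def A3_def A4_def J1_def J2_def)
  also have "(\<Sum>p\<in>A1 \<union> A2 \<union> A3 \<union> A4. f p) = (\<Sum>p\<in>A1 \<union> A2 \<union> A3. f p) + (\<Sum>p\<in>A4. f p)"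
    using fin by (intro sum.union_disjoint) (auto simp: A1_def A2_def A3_def A4_def J1_def J2_def)
  also have "(\<Sum>p\<in>A1 \<union> A2 \<union> A3. f p) = (\<Sum>p\<in>A1 \<union> A2. f p) + (\<Sum>p\<in>A3. f p)"
    using fin by (intro sum.union_disjoint) (auto simp: A1_def A2_def A3_def A4_def J1_def J2_def)
  also have "(\<Sum>p\<in>A1 \<union> A2. f p) = (\<Sum>p\<in>A1. f p) + (\<Sum>p\<in>A2. f p)"
    using fin by (intro sum.union_disjoint) (auto simp: A1_def A2_def A3_def A4_def J1_def J2_def)
  also have "(\<Sum>p\<in>A1. f p) = (\<Sum>j\<in>J1. f (j, i))"
    unfolding A1_def by (subst sum.reindex) (auto simp: inj_on_def)
  also have "(\<Sum>p\<in>A2. f p) = (\<Sum>j\<in>J1. f (j, Suc i))"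
    unfolding A2_def by (subst sum.reindex) (auto simp: inj_on_def)
  also have "(\<Sum>p\<in>A3. f p) = (\<Sum>j\<in>J2. f (i, j))"
    unfolding A3_def by (subst sum.reindex) (auto simp: inj_on_def)
  also have "(\<Sum>p\<in>A4. f p) = (\<Sum>j\<in>J2. f (Suc i, j))"
    unfolding A4_def by (subst sum.reindex) (auto simp: inj_on_def)
  finally have S1: "(\<Sum>p\<in>Z. f p) = f (i, Suc i) + ((\<Sum>j\<in>J1. f (j, i)) + (\<Sum>j\<in>J1. f (j, Suc i))
     + (\<Sum>j\<in>J2. f (i, j)) + (\<Sum>j\<in>J2. f (Suc i, j)))" .
  have JJ: "{..<length xs} - {i, Suc i} = J1 \<union> J2" using i unfolding J1_def J2_def r_def by auto
  have fJ: "finite J1" "finite J2" unfolding J1_def J2_def by auto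
  have dJ: "J1 \<inter> J2 = {}" unfolding J1_def J2_def by auto
  have "(\<Sum>j\<in>{..<length xs} - {i, Suc i}. GG xs ys i j) = (\<Sum>j\<in>J1 \<union> J2. GG xs ys i j)"
    unfolding JJ ..
  also have "\<dots> = (\<Sum>j\<in>J1. GG xs ys i j) + (\<Sum>j\<in>J2. GG xs ys i j)"
    by (rule sum.union_disjoint[OF fJ dJ])
  also have "(\<Sum>j\<in>J1. GG xs ys i j) = (\<Sum>j\<in>J1. f (j, i)) + (\<Sum>j\<in>J1. f (j, Suc i))"
    unfolding sum.distrib[symmetric] by (rule sum.cong) (auto simp: GG_def f_def J1_def)
  also have "(\<Sum>j\<in>J2. GG xs ys i j) = (\<Sum>j\<in>J2. f (i, j)) + (\<Sum>j\<in>J2. f (Suc i, j))"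
    unfolding sum.distrib[symmetric] by (rule sum.cong) (auto simp: GG_def f_def J2_def)
  finally have S2: "(\<Sum>j\<in>{..<length xs} - {i, Suc i}. GG xs ys i j) =
     (\<Sum>j\<in>J1. f (j, i)) + (\<Sum>j\<in>J1. f (j, Suc i)) + ((\<Sum>j\<in>J2. f (i, j)) + (\<Sum>j\<in>J2. f (Suc i, j)))" .
  show ?thesis
    using \<open>int (asc ys) - int (asc xs) = (\<Sum>p\<in>PS. f p)\<close> \<open>(\<Sum>p\<in>PS. f p) = (\<Sum>p\<in>Z. f p)\<close> S1 S2
    unfolding f_def by simp
qed

lemma coeff_shift:
  assumes n: "n \<ge> 1" and l: "l \<ge> 1" and nz: "nonzero_coeff n l k1 k2 a b"
    and ne: "(a, b) \<noteq> (k2, k1)"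
  shows "\<exists>H\<ge>0. a = k2 - H \<and> b = k1 + H \<and> b < a"
proof (rule ccontr)
  assume nH: "\<not> (\<exists>H\<ge>0. a = k2 - H \<and> b = k1 + H \<and> b < a)"
  have st0: "sum_term n l k1 k2 e i0 f a b = 0" if e0: "0 \<le> e" for e i0 f
  proof -
    have E: "{i. i0 \<le> i \<and> a = k2 - e - int n * int l * int i \<and> b = k1 + e + int n * int l * int i \<and> a > b} = {}"
    proof (rule ccontr)
      assume "{i. i0 \<le> i \<and> a = k2 - e - int n * int l * int i \<and> b = k1 + e + int n * int l * int i \<and> a > b} \<noteq> {}"
      then obtain i where i: "a = k2 - e - int n * int l * int i" "b = k1 + e + int n * int l * int i" "a > b"
        by auto
      have "0 \<le> e + int n * int l * int i" using e0 by simp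
      moreover have "a = k2 - (e + int n * int l * int i)" "b = k1 + (e + int n * int l * int i)"
        using i by auto
      ultimately show False using nH i(3) by blast
    qed
    show ?thesis unfolding sum_term_def E by simp
  qed
  have Np: "int n * int l > 0" using n l by simp
  have g0: "0 \<le> (cc n l k2 - cc n l k1) mod (int n * int l)" using Np by simp
  have e0: "0 \<le> (int n * (dd n l k2 - dd n l k1)) mod (int n * int l)"
    using Np pos_mod_sign by blast
  have ge0: "0 \<le> (cc n l k2 - cc n l k1) mod (int n * int l) + (int n * (dd n l k2 - dd n l k1)) mod (int n * int l)"
    using g0 e0 by simp
  have "straight_coeff n l k1 k2 a b q = 0" for q
    unfolding straight_coeff_def Let_def
    by (simp only: st0[OF g0] st0[OF e0] st0[OF ge0] st0[OF order_refl] ne if_False) simp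
  then show False using nz unfolding nonzero_coeff_def by simp
qed

lemma wstep_pos:
  assumes "wstep n l ks ls"
  obtains i where "Suc i < length ks" "ks ! i \<le> ks ! Suc i" "\<forall>j<i. ks ! j > ks ! Suc j"
    "\<forall>j<length ks. j \<noteq> i \<and> j \<noteq> Suc i \<longrightarrow> ls ! j = ks ! j"
    "nonzero_coeff n l (ks ! i) (ks ! Suc i) (ls ! i) (ls ! Suc i)" "length ls = length ks"
    "step_m ks ls = (if (ls ! i, ls ! Suc i) = (ks ! Suc i, ks ! i) then 0 else 1)"
proof -
  obtain i where i: "i + 1 < length ks" "ks ! i \<le> ks ! (i + 1)" "\<forall>j<i. ks ! j > ks ! (j + 1)"
    "\<forall>j<length ks. j \<noteq> i \<and> j \<noteq> i + 1 \<longrightarrow> ls ! j = ks ! j"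
    "nonzero_coeff n l (ks ! i) (ks ! (i + 1)) (ls ! i) (ls ! (i + 1))" "length ls = length ks"
    using assms unfolding wstep_def by blast
  have "(LEAST i. ks ! i \<le> ks ! (i + 1)) = i"
  proof (rule Least_equality)
    show "ks ! i \<le> ks ! (i + 1)" using i by simp
    fix y assume "ks ! y \<le> ks ! (y + 1)"
    then show "i \<le> y" using i(3) by (meson not_le)
  qed
  then have "step_m ks ls = (if (ls ! i, ls ! Suc i) = (ks ! Suc i, ks ! i) then 0 else 1)"
    unfolding step_m_def Let_def by simp
  then show ?thesis using that i by simp
qed

lemma step_swap:
  assumes w: "wstep n l ks ls" and s0: "step_m ks ls = 0"
  shows "mset ls = mset ks" "distinct ks \<Longrightarrow> asc ls + 1 = asc ks"
proof -
  obtain i where i: "Suc i < length ks" "ks ! i \<le> ks ! Suc i"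
    "\<forall>j<length ks. j \<noteq> i \<and> j \<noteq> Suc i \<longrightarrow> ls ! j = ks ! j" "length ls = length ks"
    "step_m ks ls = (if (ls ! i, ls ! Suc i) = (ks ! Suc i, ks ! i) then 0 else 1)"
    using wstep_pos[OF w] by metis
  have sw: "ls ! i = ks ! Suc i" "ls ! Suc i = ks ! i" using i(5) s0 by (auto split: if_splits)
  have lsq: "ls = ks[Suc i := ks ! i, i := ks ! Suc i]"
  proof (rule nth_equalityI)
    show "length ls = length (ks[Suc i := ks ! i, i := ks ! Suc i])" using i by simp
    fix j assume "j < length ls"
    then show "ls ! j = ks[Suc i := ks ! i, i := ks ! Suc i] ! j"
      using i sw by (cases "j = i"; cases "j = Suc i") auto
  qed
  show "mset ls = mset ks" unfolding lsq using mset_swap[of i ks "Suc i"] i by simp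
  assume d: "distinct ks"
  have lt: "ks ! i < ks ! Suc i" using i(1,2) d nth_eq_iff_index_eq[OF d, of i "Suc i"] by force
  have G0: "GG ks ls i j = 0" if "j \<in> {..<length ks} - {i, Suc i}" for j
    using that i(3) sw unfolding GG_def ind_def by auto
  have "int (asc ls) - int (asc ks) = (ind ls (i, Suc i) - ind ks (i, Suc i))
           + (\<Sum>j\<in>{..<length ks} - {i, Suc i}. GG ks ls i j)"
    by (rule asc_repl) (use i in auto)
  also have "(\<Sum>j\<in>{..<length ks} - {i, Suc i}. GG ks ls i j) = 0" using G0 by simp
  finally show "asc ls + 1 = asc ks" using lt sw unfolding ind_def by simp
qed

lemma step_one:
  assumes n: "n \<ge> 1" and l: "l \<ge> 1" and w: "wstep n l ks ls" and s1: "step_m ks ls = 1"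
    and dk: "distinct ks" and dl: "distinct ls"
  shows "\<exists>u v H. u \<in> set ks \<and> v \<in> set ks \<and> 0 < H \<and> u + H < v - H \<and>
     set ls = (set ks - {u, v}) \<union> {u + H, v - H} \<and>
     u + H \<notin> set ks - {u, v} \<and> v - H \<notin> set ks - {u, v} \<and>
     even (int (asc ls) - int (asc ks) + 1 +
           int (card ((set ks - {u, v}) \<inter> ({u<..<u + H} \<union> {v - H<..<v}))))"
proof -
  obtain i where i: "Suc i < length ks" "ks ! i \<le> ks ! Suc i"
    "\<forall>j<length ks. j \<noteq> i \<and> j \<noteq> Suc i \<longrightarrow> ls ! j = ks ! j"
    "nonzero_coeff n l (ks ! i) (ks ! Suc i) (ls ! i) (ls ! Suc i)" "length ls = length ks"
    "step_m ks ls = (if (ls ! i, ls ! Suc i) = (ks ! Suc i, ks ! i) then 0 else 1)"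
    using wstep_pos[OF w] by metis
  define u where "u = ks ! i"
  define v where "v = ks ! Suc i"
  define r where "r = length ks"
  have ne: "(ls ! i, ls ! Suc i) \<noteq> (v, u)" using i(6) s1 unfolding u_def v_def by auto
  obtain H where H: "H \<ge> 0" "ls ! i = v - H" "ls ! Suc i = u + H" "u + H < v - H"
    using coeff_shift[OF n l i(4)[folded u_def v_def] ne] by auto
  have Hp: "0 < H" using H ne by (cases "H = 0") auto
  define Oth where "Oth = {..<r} - {i, Suc i}"
  define I where "I = {u<..<u + H} \<union> {v - H<..<v}"
  have ksO: "set ks - {u, v} = (\<lambda>j. ks ! j) ` Oth"
  proof
    show "set ks - {u, v} \<subseteq> (\<lambda>j. ks ! j) ` Oth"
    proof
      fix x assume x: "x \<in> set ks - {u, v}"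
      then obtain j where j: "j < r" "x = ks ! j" by (auto simp: in_set_conv_nth r_def)
      then have "j \<noteq> i" "j \<noteq> Suc i" using x unfolding u_def v_def by auto
      then show "x \<in> (\<lambda>j. ks ! j) ` Oth" using j unfolding Oth_def by auto
    qed
    show "(\<lambda>j. ks ! j) ` Oth \<subseteq> set ks - {u, v}"
    proof
      fix x assume "x \<in> (\<lambda>j. ks ! j) ` Oth"
      then obtain j where j: "j \<in> Oth" "x = ks ! j" by auto
      then have "j < r" "j \<noteq> i" "j \<noteq> Suc i" unfolding Oth_def by auto
      then show "x \<in> set ks - {u, v}"
        using j nth_eq_iff_index_eq[OF dk, of j i] nth_eq_iff_index_eq[OF dk, of j "Suc i"] i(1)
        unfolding u_def v_def r_def by auto
    qed
  qed
  have lsO: "set ls = (\<lambda>j. ks ! j) ` Oth \<union> {u + H, v - H}"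
  proof
    show "set ls \<subseteq> (\<lambda>j. ks ! j) ` Oth \<union> {u + H, v - H}"
    proof
      fix x assume "x \<in> set ls"
      then obtain j where j: "j < r" "x = ls ! j" using i(5) by (auto simp: in_set_conv_nth r_def)
      show "x \<in> (\<lambda>j. ks ! j) ` Oth \<union> {u + H, v - H}"
      proof (cases "j = i \<or> j = Suc i")
        case True then show ?thesis using j H by auto
      next
        case False then show ?thesis using j i(3) unfolding Oth_def r_def by auto
      qed
    qed
    show "(\<lambda>j. ks ! j) ` Oth \<union> {u + H, v - H} \<subseteq> set ls"
    proof
      fix x assume "x \<in> (\<lambda>j. ks ! j) ` Oth \<union> {u + H, v - H}"
      then consider "x = u + H" | "x = v - H" | j where "j \<in> Oth" "x = ks ! j" by auto
      then show "x \<in> set ls"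
      proof cases
        case 1 then show ?thesis using H(3) i(1,5) by (metis nth_mem)
      next
        case 2 then show ?thesis using H(2) i(1,5) by (metis Suc_lessD nth_mem)
      next
        case 3 then show ?thesis using i(3,5) unfolding Oth_def r_def by (metis DiffE insertCI lessThan_iff nth_mem)
      qed
    qed
  qed
  have notin: "u + H \<notin> (\<lambda>j. ks ! j) ` Oth" "v - H \<notin> (\<lambda>j. ks ! j) ` Oth"
  proof -
    show "u + H \<notin> (\<lambda>j. ks ! j) ` Oth"
    proof
      assume "u + H \<in> (\<lambda>j. ks ! j) ` Oth"
      then obtain j where j: "j \<in> Oth" "u + H = ks ! j" by auto
      then have "ls ! j = ls ! Suc i" "j < r" "j \<noteq> Suc i" using i(3) H(3) unfolding Oth_def r_def by auto
      then show False using nth_eq_iff_index_eq[OF dl, of j "Suc i"] i(1,5) r_def by auto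
    qed
    show "v - H \<notin> (\<lambda>j. ks ! j) ` Oth"
    proof
      assume "v - H \<in> (\<lambda>j. ks ! j) ` Oth"
      then obtain j where j: "j \<in> Oth" "v - H = ks ! j" by auto
      then have "ls ! j = ls ! i" "j < r" "j \<noteq> i" using i(3) H(2) unfolding Oth_def r_def by auto
      then show False using nth_eq_iff_index_eq[OF dl, of j i] i(1,5) r_def by auto
    qed
  qed
  have injO: "inj_on (\<lambda>j. ks ! j) Oth"
    unfolding Oth_def r_def inj_on_def using nth_eq_iff_index_eq[OF dk] by auto
  have cardI: "card ((set ks - {u, v}) \<inter> I) = card {j \<in> Oth. ks ! j \<in> I}"
  proof -
    have "(set ks - {u, v}) \<inter> I = (\<lambda>j. ks ! j) ` {j \<in> Oth. ks ! j \<in> I}" unfolding ksO by auto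
    moreover have "inj_on (\<lambda>j. ks ! j) {j \<in> Oth. ks ! j \<in> I}" using injO by (rule inj_on_subset) auto
    ultimately show ?thesis by (simp add: card_image)
  qed
  have ev: "even (GG ks ls i j - of_bool (ks ! j \<in> I))" if j: "j \<in> Oth" for j
  proof -
    define x where "x = ks ! j"
    have jr: "j < r" "j \<noteq> i" "j \<noteq> Suc i" using j unfolding Oth_def by auto
    have xne: "x \<noteq> u" "x \<noteq> v" unfolding x_def u_def v_def
      using nth_eq_iff_index_eq[OF dk, of j i] nth_eq_iff_index_eq[OF dk, of j "Suc i"] jr i(1) r_def by auto
    have xim: "x \<in> (\<lambda>j. ks ! j) ` Oth" using j unfolding x_def by blast
    have xne2: "x \<noteq> u + H" "x \<noteq> v - H" using notin xim by metis+
    have lj: "ls ! j = x" using i(3) jr unfolding x_def r_def by auto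
    have uv: "u < u + H" "v - H < v" using Hp by auto
    have GGj: "GG ks ls i j = (if j < i then (of_bool (x < v - H) - of_bool (x < u)) + (of_bool (x < u + H) - of_bool (x < v))
       else (of_bool (v - H < x) - of_bool (u < x)) + (of_bool (u + H < x) - of_bool (v < x)))"
      unfolding GG_def ind_def using lj H(2,3) by (simp add: x_def u_def v_def)
    have "x < u \<or> (u < x \<and> x < u + H) \<or> (u + H < x \<and> x < v - H) \<or> (v - H < x \<and> x < v) \<or> v < x"
      using xne xne2 by auto
    then have "even (GG ks ls i j - of_bool (x \<in> I))"
      unfolding I_def GGj using H(4) Hp by (elim disjE) auto
    then show ?thesis unfolding x_def .
  qed
  have "int (asc ls) - int (asc ks) = (ind ls (i, Suc i) - ind ks (i, Suc i))
           + (\<Sum>j\<in>{..<length ks} - {i, Suc i}. GG ks ls i j)"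
    by (rule asc_repl) (use i in auto)
  also have "ind ls (i, Suc i) - ind ks (i, Suc i) = -1"
    using H(2,3,4) Hp i(2) nth_eq_iff_index_eq[OF dk, of i "Suc i"] i(1) unfolding ind_def u_def v_def
    by auto
  finally have D: "int (asc ls) - int (asc ks) = -1 + (\<Sum>j\<in>Oth. GG ks ls i j)"
    unfolding Oth_def r_def by simp
  have "even ((\<Sum>j\<in>Oth. GG ks ls i j) - (\<Sum>j\<in>Oth. of_bool (ks ! j \<in> I)))"
    unfolding sum_subtractf[symmetric] by (rule dvd_sum) (use ev in auto)
  moreover have "(\<Sum>j\<in>Oth. (of_bool (ks ! j \<in> I) :: int)) = int (card {j \<in> Oth. ks ! j \<in> I})"
    unfolding Oth_def by (simp add: Int_def)
  ultimately have evf: "even (int (asc ls) - int (asc ks) + 1 + int (card ((set ks - {u, v}) \<inter> I)))"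
    using D cardI by (simp add: algebra_simps)
  have uin: "u \<in> set ks" "v \<in> set ks" unfolding u_def v_def using i(1) by auto
  have n1: "u + H \<notin> set ks - {u, v}" "v - H \<notin> set ks - {u, v}" using notin ksO by simp_all
  have sl: "set ls = (set ks - {u, v}) \<union> {u + H, v - H}" using lsO ksO by simp
  show ?thesis
    apply (rule exI[of _ u]) apply (rule exI[of _ v]) apply (rule exI[of _ H])
    using uin Hp H(4) sl n1 evf unfolding I_def by (intro conjI) simp_all
qed

lemma dec_distinct: "sorted_wrt (>) (xs :: int list) \<Longrightarrow> distinct xs"
  by (induction xs) auto

lemma lin_aux: "(a::int) - 1 = b \<Longrightarrow> x - b = - p \<Longrightarrow> a - 1 - p - 1 - c = (x + 1 + c) - 2 * (1 + c)"
  by simp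

lemma seq_parity:
  fixes kss :: "int list list"
  assumes n: "n \<ge> 1" and l: "l \<ge> 1" and gs: "good_seq n l s lam mu kss"
    and dm: "sorted_wrt (>) (beta s mu)" and dl: "sorted_wrt (>) (beta s lam)"
  shows "\<exists>u v H. u \<in> set (beta s mu) \<and> v \<in> set (beta s mu) \<and> 0 < H \<and> u + H < v - H \<and>
     set (beta s lam) = (set (beta s mu) - {u, v}) \<union> {u + H, v - H} \<and>
     u + H \<notin> set (beta s mu) - {u, v} \<and> v - H \<notin> set (beta s mu) - {u, v} \<and>
     even (int (length kss - 1) - 1 - int (PR (length (beta s mu))) - 1 -
       int (card ((set (beta s mu) - {u, v}) \<inter> ({u<..<u + H} \<union> {v - H<..<v}))))"
proof -
  define T where "T t = kss ! t" for t
  define N where "N = length kss - 1"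
  define r where "r = length (beta s mu)"
  have ne: "kss \<noteq> []" using gs unfolding good_seq_def by simp
  have T0: "T 0 = rev (beta s mu)" using gs ne unfolding good_seq_def T_def by (simp add: hd_conv_nth)
  have TN: "T N = beta s lam" using gs ne unfolding good_seq_def T_def N_def by (simp add: last_conv_nth)
  have wst: "wstep n l (T t) (T (Suc t))" if "t < N" for t
    using gs that ne unfolding good_seq_def T_def N_def by auto
  define sm where "sm t = step_m (T t) (T (Suc t))" for t
  have sm01: "sm t = 0 \<or> sm t = 1" for t unfolding sm_def step_m_def Let_def by simp
  have S1: "(\<Sum>t<N. sm t) = 1" using gs unfolding good_seq_def sm_def T_def N_def by simp
  have "(\<Sum>t<N. sm t) = (\<Sum>t<N. of_bool (sm t = 1))"
    by (rule sum.cong) (use sm01 in auto)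
  also have "\<dots> = card ({..<N} \<inter> {t. sm t = 1})" by simp
  finally have "card ({..<N} \<inter> {t. sm t = 1}) = 1" using S1 by simp
  then obtain t0 where t0s: "{..<N} \<inter> {t. sm t = 1} = {t0}" by (rule card_1_singletonE)
  have t0: "t0 < N" "sm t0 = 1" using t0s by auto
  have oth: "sm t = 0" if "t < N" "t \<noteq> t0" for t
    using t0s that sm01[of t] by auto
  have fwd: "t \<le> t0 \<Longrightarrow> mset (T t) = mset (T 0)" for t
  proof (induction t)
    case 0 then show ?case by simp
  next
    case (Suc t)
    then have "t < N" "t \<noteq> t0" using t0 by auto
    then have "mset (T (Suc t)) = mset (T t)"
      using step_swap(1)[OF wst] oth unfolding sm_def by blast
    then show ?case using Suc by simp
  qed
  have bwd: "mset (T t) = mset (T N)" if "Suc t0 \<le> t" "t \<le> N" for t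
    using that(2,1)
  proof (induction rule: inc_induct)
    case base then show ?case by simp
  next
    case (step m)
    then have "m < N" "m \<noteq> t0" by auto
    then have "mset (T (Suc m)) = mset (T m)"
      using step_swap(1)[OF wst] oth unfolding sm_def by blast
    then show ?case using step by simp
  qed
  have dT0: "distinct (T 0)" using T0 dec_distinct[OF dm] by simp
  have dTN: "distinct (T N)" using TN dec_distinct[OF dl] by simp
  have dist: "distinct (T t)" if "t \<le> N" for t
  proof (cases "t \<le> t0")
    case True then show ?thesis using fwd dT0 mset_eq_imp_distinct_iff by blast
  next
    case False then show ?thesis using bwd[of t] that dTN mset_eq_imp_distinct_iff by auto
  qed
  define A where "A t = int (asc (T t))" for t
  define d where "d t = A (Suc t) - A t" for t
  have dm1: "d t = -1" if "t < N" "t \<noteq> t0" for t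
  proof -
    have "asc (T (Suc t)) + 1 = asc (T t)"
      using step_swap(2)[OF wst[OF that(1)]] oth[OF that] dist[of t] that(1) unfolding sm_def by simp
    then show ?thesis unfolding d_def A_def by simp
  qed
  have e1: "(\<Sum>t<N. d t) = A N - A 0" unfolding d_def by (rule sum_lessThan_telescope)
  have e2: "A N = 0" unfolding A_def TN using asc_dec[OF dl] by simp
  have e3: "A 0 = int (PR r)"
  proof -
    have "sorted_wrt (<) (rev (beta s mu))" using dm by (simp add: sorted_wrt_rev)
    then show ?thesis unfolding A_def T0 r_def using asc_inc by simp
  qed
  have e4: "(\<Sum>t<N. d t) = d t0 + (\<Sum>t\<in>{..<N} - {t0}. d t)"
    using t0 by (simp add: sum.remove)
  have e5: "(\<Sum>t\<in>{..<N} - {t0}. d t) = (\<Sum>t\<in>{..<N} - {t0}. -1)"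
    by (rule sum.cong) (use dm1 in auto)
  have e6: "card ({..<N} - {t0}) = N - 1" using t0 by simp
  have e7: "(\<Sum>t\<in>{..<N} - {t0}. (-1::int)) = - int (N - 1)" using e6 by simp
  have key: "d t0 - int (N - 1) = - int (PR r)" using e1 e2 e3 e4 e5 e7 by linarith
  have "set (T t0) = set (T 0)" by (rule mset_eq_setD) (rule fwd, simp)
  then have mu_set: "set (T t0) = set (beta s mu)" using T0 by simp
  have "set (T (Suc t0)) = set (T N)" by (rule mset_eq_setD) (rule bwd, use t0 in auto)
  then have lam_set: "set (T (Suc t0)) = set (beta s lam)" using TN by simp
  obtain u v H where uvH: "u \<in> set (T t0)" "v \<in> set (T t0)" "0 < H" "u + H < v - H"
     "set (T (Suc t0)) = (set (T t0) - {u, v}) \<union> {u + H, v - H}"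
     "u + H \<notin> set (T t0) - {u, v}" "v - H \<notin> set (T t0) - {u, v}"
     "even (int (asc (T (Suc t0))) - int (asc (T t0)) + 1 +
           int (card ((set (T t0) - {u, v}) \<inter> ({u<..<u + H} \<union> {v - H<..<v}))))"
    using step_one[OF n l wst[OF t0(1)] t0(2)[unfolded sm_def] dist[of t0] dist[of "Suc t0"]] t0(1) by auto
  have "N \<ge> 1" using t0 by simp
  then have LN: "int (length kss - 1) - 1 = int (N - 1)" unfolding N_def by simp
  define C where "C = card ((set (beta s mu) - {u, v}) \<inter> ({u<..<u + H} \<union> {v - H<..<v}))"
  define x where "x = int (asc (T (Suc t0))) - int (asc (T t0))"
  have evx: "even (x + 1 + int C)" using uvH(8) unfolding x_def C_def mu_set by simp
  have kx: "x - int (N - 1) = - int (PR r)" using key unfolding x_def d_def A_def by simp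
  have eq: "int (length kss - 1) - 1 - int (PR r) - 1 - int C = (x + 1 + int C) - 2 * (1 + int C)"
    using lin_aux[OF LN kx] .
  have ev2: "even ((x + 1 + int C) - 2 * (1 + int C))" using evx by (intro dvd_diff) auto
  have par: "even (int (length kss - 1) - 1 - int (PR r) - 1 - int C)" by (subst eq) (rule ev2)
  show ?thesis
    apply (rule exI[of _ u], rule exI[of _ v], rule exI[of _ H])
    using uvH(1-7) par unfolding mu_set lam_set C_def r_def by blast
qed

lemma len_le_sum: "0 \<notin> set p \<Longrightarrow> length p \<le> sum_list (p :: nat list)"
proof (induction p)
  case Nil then show ?case by simp
next
  case (Cons x xs)
  then have "1 \<le> x" "length xs \<le> sum_list xs" by auto
  then show ?case by simp
qed

lemma length_beta: "length (beta s p) = sum_list p"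
  by (simp add: beta_def del: upt.simps)

lemma beta_nth: "k < sum_list p \<Longrightarrow> beta s p ! k = bd s p (Suc k)"
  by (simp add: beta_def bd_def nth_upt del: upt.simps)

lemma set_beta: "set (beta s p) = bd s p ` {1..sum_list p}"
proof -
  have "set [1..<sum_list p + 1] = {1..sum_list p}" by auto
  then show ?thesis unfolding beta_def bd_def by (simp add: image_def)
qed

lemma beta_dec: "is_partition p \<Longrightarrow> sorted_wrt (>) (beta s p)"
  unfolding sorted_wrt_iff_nth_less length_beta
  by (auto simp: beta_nth intro!: bd_strict)

lemma betaI_bd: "1 \<le> i \<Longrightarrow> i \<le> sum_list p \<Longrightarrow> betaI s p i = bd s p i"
  unfolding betaI_def using beta_nth[of "i - 1" p s] by simp

lemma NN_bd: "is_partition p \<Longrightarrow> 1 \<le> i \<Longrightarrow> NN c p (bd c p i) = i"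
proof -
  assume p: "is_partition p" and i: "1 \<le> i"
  have "i \<le> NN c p (bd c p i)" using NN_iff[OF p i, of "bd c p i" c] by simp
  moreover have "\<not> Suc i \<le> NN c p (bd c p i)"
    using NN_iff[OF p, of "Suc i" "bd c p i" c] bd_strict[OF p i, of "Suc i" c] by auto
  ultimately show ?thesis by simp
qed

lemma Binf_split:
  assumes p: "is_partition p"
  shows "Binf s p = set (beta s p) \<union> {x. x \<le> s - int (sum_list p)}"
proof -
  have lp: "length p \<le> sum_list p" using p len_le_sum unfolding is_partition_def by blast
  show ?thesis
  proof
    show "Binf s p \<subseteq> set (beta s p) \<union> {x. x \<le> s - int (sum_list p)}"
    proof
      fix x assume "x \<in> Binf s p"
      then obtain i where i: "1 \<le> i" "x = bd s p i" unfolding Binf_def by auto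
      show "x \<in> set (beta s p) \<union> {x. x \<le> s - int (sum_list p)}"
      proof (cases "i \<le> sum_list p")
        case True then show ?thesis using i set_beta by auto
      next
        case False
        then have "x = s + 1 - int i" using i bd_large[of p i s] lp by simp
        then show ?thesis using False by simp
      qed
    qed
    show "set (beta s p) \<union> {x. x \<le> s - int (sum_list p)} \<subseteq> Binf s p"
    proof
      fix x assume x: "x \<in> set (beta s p) \<union> {x. x \<le> s - int (sum_list p)}"
      show "x \<in> Binf s p"
      proof (cases "x \<in> set (beta s p)")
        case True then show ?thesis unfolding set_beta Binf_def by auto
      next
        case False
        then have xl: "x \<le> s - int (sum_list p)" using x by simp
        define i where "i = nat (s + 1 - x)"
        have "length p < i" "1 \<le> i" using xl lp unfolding i_def by auto
        then have "bd s p i = x" using bd_large[of p i s] xl unfolding i_def by simp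
        then show ?thesis unfolding Binf_def using \<open>1 \<le> i\<close> by blast
      qed
    qed
  qed
qed

lemma beta_gt:
  assumes p: "is_partition p" and x: "x \<in> set (beta s p)"
  shows "s - int (sum_list p) < x"
proof -
  obtain i where i: "1 \<le> i" "i \<le> sum_list p" "x = bd s p i" using x unfolding set_beta by auto
  have "bd s p (sum_list p) \<le> bd s p i" using bd_mono[OF p i(1,2)] .
  moreover have "s + 1 - int (sum_list p) \<le> bd s p (sum_list p)" unfolding bd_def by simp
  ultimately show ?thesis using i by simp
qed

lemma finite_Binf_ge: "finite {x \<in> Binf c p. t \<le> x}"
proof -
  have "{x \<in> Binf c p. t \<le> x} = bd c p ` {i. 1 \<le> i \<and> t \<le> bd c p i}"
    unfolding Binf_def by auto
  then show ?thesis using finite_ge by simp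
qed

lemma card_swap2:
  assumes fin: "finite {x \<in> X. Q x}" and a: "a \<in> X" and b: "b \<in> X" and ab: "a \<noteq> b"
    and c: "c \<notin> X" and d: "d \<notin> X" and cd: "c \<noteq> d"
  shows "int (card {y \<in> (X - {a, b}) \<union> {c, d}. Q y}) =
     int (card {x \<in> X. Q x}) - of_bool (Q a) - of_bool (Q b) + of_bool (Q c) + of_bool (Q d)"
proof -
  define A where "A = {x \<in> X. Q x}"
  have "{y \<in> (X - {a, b}) \<union> {c, d}. Q y} = (A - {a} - {b}) \<union> ({c, d} \<inter> {y. Q y})"
    unfolding A_def by auto
  moreover have "(A - {a} - {b}) \<inter> ({c, d} \<inter> {y. Q y}) = {}" unfolding A_def using c d by auto
  moreover have "finite (A - {a} - {b})" "finite ({c, d} \<inter> {y. Q y})" using fin unfolding A_def by auto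
  ultimately have e: "card {y \<in> (X - {a, b}) \<union> {c, d}. Q y} = card (A - {a} - {b}) + card ({c, d} \<inter> {y. Q y})"
    by (simp add: card_Un_disjoint)
  have f1: "int (card (A - {a} - {b})) = int (card A) - of_bool (Q a) - of_bool (Q b)"
  proof -
    have "int (card (A - {a})) = int (card A) - of_bool (Q a)"
    proof (cases "Q a")
      case True
      then have aA: "a \<in> A" using a unfolding A_def by simp
      have fA: "finite A" using fin unfolding A_def .
      have "card A > 0" using aA fA card_gt_0_iff by blast
      then show ?thesis using card_Diff_singleton[OF aA] True by simp
    next
      case False then show ?thesis unfolding A_def by simp
    qed
    moreover have "int (card (A - {a} - {b})) = int (card (A - {a})) - of_bool (Q b)"
    proof (cases "Q b")
      case True
      then have bA: "b \<in> A - {a}" using b ab unfolding A_def by simp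
      have fA: "finite (A - {a})" using fin unfolding A_def by simp
      have "card (A - {a}) > 0" using bA fA card_gt_0_iff by blast
      then show ?thesis using card_Diff_singleton[OF bA] True by simp
    next
      case False then show ?thesis unfolding A_def by simp
    qed
    ultimately show ?thesis by simp
  qed
  have f2: "int (card ({c, d} \<inter> {y. Q y})) = of_bool (Q c) + of_bool (Q d)"
    using cd by (cases "Q c"; cases "Q d") auto
  show ?thesis using e f1 f2 unfolding A_def by simp
qed

lemma card_swap1:
  assumes fin: "finite {x \<in> X. Q x}" and a: "a \<in> X" and c: "c \<notin> X"
  shows "int (card {y \<in> (X - {a}) \<union> {c}. Q y}) =
     int (card {x \<in> X. Q x}) - of_bool (Q a) + of_bool (Q c)"
proof -
  define A where "A = {x \<in> X. Q x}"
  have "{y \<in> (X - {a}) \<union> {c}. Q y} = (A - {a}) \<union> ({c} \<inter> {y. Q y})"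
    unfolding A_def by auto
  moreover have "(A - {a}) \<inter> ({c} \<inter> {y. Q y}) = {}" unfolding A_def using c by auto
  moreover have "finite (A - {a})" "finite ({c} \<inter> {y. Q y})" using fin unfolding A_def by auto
  ultimately have e: "card {y \<in> (X - {a}) \<union> {c}. Q y} = card (A - {a}) + card ({c} \<inter> {y. Q y})"
    by (simp add: card_Un_disjoint)
  have f1: "int (card (A - {a})) = int (card A) - of_bool (Q a)"
  proof (cases "Q a")
    case True
    then have aA: "a \<in> A" using a unfolding A_def by simp
    have fA: "finite A" using fin unfolding A_def .
    have "card A > 0" using aA fA card_gt_0_iff by blast
    then show ?thesis using card_Diff_singleton[OF aA] True by simp
  next
    case False then show ?thesis unfolding A_def by simp
  qed
  have f2: "int (card ({c} \<inter> {y. Q y})) = of_bool (Q c)" by (cases "Q c") auto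
  show ?thesis using e f1 f2 unfolding A_def by simp
qed

lemma move_ht:
  assumes f: "is_partition f" and g: "is_partition g" and pp: "p < p'"
    and disj: "p' \<le> q \<or> q' \<le> p"
    and HN: "\<And>t. int (NN c g t) = int (NN c f t) + of_bool (p < t \<and> t \<le> p') - of_bool (q < t \<and> t \<le> q')"
  shows "fst (head (diagram g - diagram f)) = NN c g (p + 1)"
    "fst (tail (diagram g - diagram f)) = NN c g p'"
    "card (diagram g - diagram f) = nat (p' - p)"
proof -
  have H1: "NN c f t < NN c g t \<longleftrightarrow> p < t \<and> t \<le> p'" for t
    using HN[of t] disj by (cases "p < t \<and> t \<le> p'"; cases "q < t \<and> t \<le> q'") auto
  have H2: "NN c g t = NN c f t + 1" if "p < t" "t \<le> p'" for t
    using HN[of t] disj that by auto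
  show "fst (head (diagram g - diagram f)) = NN c g (p + 1)"
    "fst (tail (diagram g - diagram f)) = NN c g p'"
    "card (diagram g - diagram f) = nat (p' - p)"
    using headtail[OF f g pp H1 H2] by auto
qed

lemma lam_mu_geom:
  assumes lam: "is_partition lam" and mu: "is_partition mu" and r: "sum_list lam = sum_list mu"
    and u: "u \<in> set (beta s mu)" and v: "v \<in> set (beta s mu)" and H: "0 < H" "u + H < v - H"
    and sl: "set (beta s lam) = (set (beta s mu) - {u, v}) \<union> {u + H, v - H}"
    and n1: "u + H \<notin> set (beta s mu) - {u, v}" and n2: "v - H \<notin> set (beta s mu) - {u, v}"
  shows "hH lam mu = H" "betaI s mu (xrow lam mu) = u" "betaI s mu (yrow lam mu) = v"
proof -
  define L where "L = {x. x \<le> s - int (sum_list mu)}"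
  define Xm where "Xm = Binf s mu"
  define Xl where "Xl = Binf s lam"
  have Xm: "Xm = set (beta s mu) \<union> L" unfolding Xm_def L_def using Binf_split[OF mu] .
  have Xl: "Xl = set (beta s lam) \<union> L" unfolding Xl_def L_def using Binf_split[OF lam] r by simp
  have gt: "x \<notin> L" if "x \<in> set (beta s mu)" for x using beta_gt[OF mu that] unfolding L_def by auto
  have uL: "u \<notin> L" "v \<notin> L" using gt u v by auto
  have UL: "u + H \<notin> L" "v - H \<notin> L" using uL H unfolding L_def by auto
  have XX: "Xl = (Xm - {u, v}) \<union> {u + H, v - H}" unfolding Xl Xm sl using uL by auto
  have uv: "u \<noteq> v" using H by auto
  have cX: "u + H \<notin> Xm" "v - H \<notin> Xm" using n1 n2 UL H unfolding Xm by auto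
  have uX: "u \<in> Xm" "v \<in> Xm" using u v unfolding Xm by auto
  have fXm: "finite {x \<in> Xm. t \<le> x}" for t unfolding Xm_def by (rule finite_Binf_ge)
  have NNl: "int (NN s lam t) = int (NN s mu t) - of_bool (t \<le> u) - of_bool (t \<le> v)
      + of_bool (t \<le> u + H) + of_bool (t \<le> v - H)" for t
  proof -
    have "int (NN s lam t) = int (card {x \<in> Xl. t \<le> x})" unfolding Xl_def using NN_Binf[OF lam] by simp
    also have "\<dots> = int (card {x \<in> Xm. t \<le> x}) - of_bool (t \<le> u) - of_bool (t \<le> v)
      + of_bool (t \<le> u + H) + of_bool (t \<le> v - H)"
      unfolding XX by (rule card_swap2) (use fXm uX uv cX H in auto)
    also have "card {x \<in> Xm. t \<le> x} = NN s mu t" unfolding Xm_def using NN_Binf[OF mu] by simp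
    finally show ?thesis .
  qed
  have HN1: "int (NN s lam t) = int (NN s mu t) + of_bool (u < t \<and> t \<le> u + H) - of_bool (v - H < t \<and> t \<le> v)" for t
    using NNl[of t] H by (cases "t \<le> u"; cases "t \<le> u + H"; cases "t \<le> v - H"; cases "t \<le> v") auto
  have HN2: "int (NN s mu t) = int (NN s lam t) + of_bool (v - H < t \<and> t \<le> v) - of_bool (u < t \<and> t \<le> u + H)" for t
    using HN1[of t] by simp
  have d1: "diagram lam - (diagram lam \<inter> diagram mu) = diagram lam - diagram mu" by auto
  have d2: "diagram mu - (diagram lam \<inter> diagram mu) = diagram mu - diagram lam" by auto
  have m1: "fst (head (diagram lam - diagram mu)) = NN s lam (u + 1)"
    "card (diagram lam - diagram mu) = nat (u + H - u)"
    using move_ht[OF mu lam _ _ HN1] H by auto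
  have m2: "fst (tail (diagram mu - diagram lam)) = NN s mu v"
    using move_ht[OF lam mu _ _ HN2] H by auto
  show "hH lam mu = H" unfolding hH_def d1 m1 using H by simp
  obtain i where i: "1 \<le> i" "i \<le> sum_list mu" "u = bd s mu i" using u unfolding set_beta by auto
  obtain j where j: "1 \<le> j" "j \<le> sum_list mu" "v = bd s mu j" using v unfolding set_beta by auto
  have "NN s lam (u + 1) = NN s mu (u + 1) + 1" using HN1[of "u + 1"] H by simp
  moreover have "NN s mu u = NN s mu (u + 1) + 1"
  proof -
    have "{x \<in> Xm. u \<le> x} = insert u {x \<in> Xm. u + 1 \<le> x}" using u Xm by auto
    moreover have "finite {x \<in> Xm. u + 1 \<le> x}" unfolding Xm_def by (rule finite_Binf_ge)
    ultimately have "card {x \<in> Xm. u \<le> x} = card {x \<in> Xm. u + 1 \<le> x} + 1" by simp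
    then show ?thesis unfolding Xm_def using NN_Binf[OF mu] by simp
  qed
  moreover have "NN s mu u = i" using NN_bd[OF mu i(1)] i(3) by simp
  ultimately have xr: "xrow lam mu = i" unfolding xrow_def d1 m1(1) by simp
  show "betaI s mu (xrow lam mu) = u" unfolding xr using betaI_bd[OF i(1,2)] i(3) by simp
  have yr: "yrow lam mu = j" unfolding yrow_def d2 m2 using NN_bd[OF mu j(1)] j(3) by simp
  show "betaI s mu (yrow lam mu) = v" unfolding yr using betaI_bd[OF j(1,2)] j(3) by simp
qed

context
  fixes n l :: nat
  assumes n: "n \<ge> 1" and l: "l \<ge> 1"
begin

lemma NposA: "int n * int l \<ge> int n"
proof -
  have "int n * 1 \<le> int n * int l" using l by (intro mult_left_mono) auto
  then show ?thesis by simp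
qed

lemma cc_bounds: "1 \<le> cc n l k" "cc n l k \<le> int n"
proof -
  have "(k - 1) mod (int n * int l) mod int n < int n" "0 \<le> (k - 1) mod (int n * int l) mod int n"
    using n by simp_all
  then show "1 \<le> cc n l k" "cc n l k \<le> int n" unfolding cc_def by linarith+
qed

lemma amod_bounds: "0 \<le> (k - 1) mod (int n * int l)" "(k - 1) mod (int n * int l) < int n * int l"
  using n l by auto

lemma dd_bounds: "1 \<le> dd n l k" "dd n l k \<le> int l"
proof -
  define a where "a = (k - 1) mod (int n * int l)"
  have a: "0 \<le> a" "a < int n * int l" using amod_bounds unfolding a_def by auto
  show "1 \<le> dd n l k" unfolding dd_def a_def[symmetric] using a n by (simp add: pos_imp_zdiv_nonneg_iff)
  have "a div int n < int l"
  proof (rule ccontr)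
    assume "\<not> a div int n < int l"
    then have "int n * int l \<le> int n * (a div int n)" using n by (intro mult_left_mono) auto
    also have "\<dots> \<le> a"
    proof -
      have "int n * (a div int n) + a mod int n = a" by simp
      moreover have "0 \<le> a mod int n" using n by simp
      ultimately show ?thesis by linarith
    qed
    finally show False using a by simp
  qed
  then show "dd n l k \<le> int l" unfolding dd_def a_def[symmetric] by simp
qed

lemma decomp: "k = cc n l k + int n * (dd n l k - 1) + int n * int l * mm n l k"
proof -
  define a where "a = (k - 1) mod (int n * int l)"
  have "k - 1 = a + int n * int l * ((k - 1) div (int n * int l))" unfolding a_def by simp
  moreover have "a = a mod int n + int n * (a div int n)" by simp
  ultimately show ?thesis unfolding cc_def dd_def mm_def a_def[symmetric] by (simp add: algebra_simps)
qed

lemma phi_mono: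
  assumes d: "dd n l k = dd n l k'" and kk: "k < k'"
  shows "phi n l k < phi n l k'"
proof -
  define c where "c = cc n l k"
  define c' where "c' = cc n l k'"
  define m where "m = mm n l k"
  define m' where "m' = mm n l k'"
  define N where "N = int n * int l"
  have cb: "1 \<le> c" "c \<le> int n" "1 \<le> c'" "c' \<le> int n" unfolding c_def c'_def using cc_bounds by auto
  have e: "k = c + int n * (dd n l k - 1) + N * m" "k' = c' + int n * (dd n l k - 1) + N * m'"
    unfolding c_def c'_def m_def m'_def N_def using decomp[of k] decomp[of k'] d by auto
  have Nn: "N \<ge> int n" unfolding N_def using NposA .
  have lt: "c + N * m < c' + N * m'" using e kk by simp
  have ph: "phi n l k = c + int n * m" "phi n l k' = c' + int n * m'"
    unfolding phi_def c_def c'_def m_def m'_def by auto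
  consider "m' \<ge> m + 1" | "m' = m" | "m' \<le> m - 1" by linarith
  then show ?thesis
  proof cases
    case 1
    then have "int n * (m' - m) \<ge> int n * 1" using n by (intro mult_left_mono) auto
    then show ?thesis using ph cb by (simp add: algebra_simps)
  next
    case 2 then show ?thesis using ph lt by simp
  next
    case 3
    then have "N * (m - m') \<ge> N * 1" using n l unfolding N_def by (intro mult_left_mono) auto
    then have "N * m' \<le> N * m - N" by (simp add: algebra_simps)
    then show ?thesis using lt cb Nn by linarith
  qed
qed

lemma phi_less_iff: "dd n l k = dd n l k' \<Longrightarrow> phi n l k < phi n l k' \<longleftrightarrow> k < k'"
proof -
  assume d: "dd n l k = dd n l k'"
  consider "k < k'" | "k = k'" | "k' < k" by linarith
  then show ?thesis
  proof cases
    case 1 then show ?thesis using phi_mono[OF d] by simp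
  next
    case 2 then show ?thesis by simp
  next
    case 3 then show ?thesis using phi_mono[OF d[symmetric]] by simp
  qed
qed

lemma phi_le_iff: "dd n l k = dd n l k' \<Longrightarrow> phi n l k \<le> phi n l k' \<longleftrightarrow> k \<le> k'"
  using phi_less_iff[of k' k] by (simp add: not_less[symmetric])

lemma phi_inj: "inj_on (phi n l) {k. dd n l k = b}"
proof (rule inj_onI)
  fix x y assume "x \<in> {k. dd n l k = b}" "y \<in> {k. dd n l k = b}" "phi n l x = phi n l y"
  then show "x = y" using phi_less_iff[of x y] phi_less_iff[of y x] by auto
qed

lemma dd_from:
  assumes c: "1 \<le> c" "c \<le> int n" and d: "1 \<le> d" "d \<le> int l"
    and km: "k mod (int n * int l) = (c + int n * (d - 1)) mod (int n * int l)"
  shows "dd n l k = d"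
proof -
  define N where "N = int n * int l"
  have "(k - 1) mod N = (c - 1 + int n * (d - 1)) mod N"
  proof -
    have "(k - 1) mod N = (c + int n * (d - 1) - 1) mod N"
      using km unfolding N_def[symmetric] by (rule mod_diff_cong) simp
    then show ?thesis by (simp add: algebra_simps)
  qed
  moreover have "0 \<le> c - 1 + int n * (d - 1)" using c d by simp
  moreover have "c - 1 + int n * (d - 1) < N"
  proof -
    have "int n * (d - 1) \<le> int n * (int l - 1)" using d by (intro mult_left_mono) auto
    then have "int n * (d - 1) \<le> int n * int l - int n" by (simp add: algebra_simps)
    then show ?thesis unfolding N_def using c by linarith
  qed
  ultimately have "(k - 1) mod N = c - 1 + int n * (d - 1)" by simp
  moreover have "(c - 1 + int n * (d - 1)) div int n = d - 1" using c n by simp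
  ultimately show ?thesis unfolding dd_def N_def by simp
qed

lemma dd_shift_gamma:
  assumes "[H = (cc n l v - cc n l u) mod (int n * int l)] (mod (int n * int l))"
  shows "dd n l (u + H) = dd n l u" "dd n l (v - H) = dd n l v"
proof -
  define N where "N = int n * int l"
  have H: "H mod N = (cc n l v - cc n l u) mod N" using assms unfolding N_def cong_def by simp
  have du: "u = cc n l u + int n * (dd n l u - 1) + N * mm n l u" unfolding N_def by (rule decomp)
  have dv: "v = cc n l v + int n * (dd n l v - 1) + N * mm n l v" unfolding N_def by (rule decomp)
  have "(u + H) mod N = (u + (cc n l v - cc n l u)) mod N" using H by (metis mod_add_right_eq)
  also have "\<dots> = (cc n l v + int n * (dd n l u - 1) + N * mm n l u) mod N"
    by (subst du) (simp add: algebra_simps)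
  also have "\<dots> = (cc n l v + int n * (dd n l u - 1)) mod N" by simp
  finally show "dd n l (u + H) = dd n l u"
    using dd_from[OF cc_bounds dd_bounds] unfolding N_def by blast
  have "(v - H) mod N = (v - (cc n l v - cc n l u)) mod N" using H by (metis mod_diff_right_eq)
  also have "\<dots> = (cc n l u + int n * (dd n l v - 1) + N * mm n l v) mod N"
    by (subst dv) (simp add: algebra_simps)
  also have "\<dots> = (cc n l u + int n * (dd n l v - 1)) mod N" by simp
  finally show "dd n l (v - H) = dd n l v"
    using dd_from[OF cc_bounds dd_bounds] unfolding N_def by blast
qed

lemma dd_shift_delta:
  assumes "[H = (int n * (dd n l v - dd n l u)) mod (int n * int l)] (mod (int n * int l))"
  shows "dd n l (u + H) = dd n l v" "dd n l (v - H) = dd n l u"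
proof -
  define N where "N = int n * int l"
  have H: "H mod N = (int n * (dd n l v - dd n l u)) mod N" using assms unfolding N_def cong_def by simp
  have du: "u = cc n l u + int n * (dd n l u - 1) + N * mm n l u" unfolding N_def by (rule decomp)
  have dv: "v = cc n l v + int n * (dd n l v - 1) + N * mm n l v" unfolding N_def by (rule decomp)
  have "(u + H) mod N = (u + int n * (dd n l v - dd n l u)) mod N" using H by (metis mod_add_right_eq)
  also have "\<dots> = (cc n l u + int n * (dd n l v - 1) + N * mm n l u) mod N"
    by (subst du) (simp add: algebra_simps)
  also have "\<dots> = (cc n l u + int n * (dd n l v - 1)) mod N" by simp
  finally show "dd n l (u + H) = dd n l v"
    using dd_from[OF cc_bounds dd_bounds] unfolding N_def by blast
  have "(v - H) mod N = (v - int n * (dd n l v - dd n l u)) mod N" using H by (metis mod_diff_right_eq)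
  also have "\<dots> = (cc n l v + int n * (dd n l u - 1) + N * mm n l v) mod N"
    by (subst dv) (simp add: algebra_simps)
  also have "\<dots> = (cc n l v + int n * (dd n l u - 1)) mod N" by simp
  finally show "dd n l (v - H) = dd n l u"
    using dd_from[OF cc_bounds dd_bounds] unfolding N_def by blast
qed

lemma delta_zero:
  assumes "(int n * (dd n l v - dd n l u)) mod (int n * int l) = 0"
  shows "dd n l v = dd n l u"
proof -
  have "int n * int l dvd int n * (dd n l v - dd n l u)" using assms by (simp add: dvd_eq_mod_eq_0)
  then have "int l dvd (dd n l v - dd n l u)" using n by simp
  moreover have "\<bar>dd n l v - dd n l u\<bar> < int l" using dd_bounds[of v] dd_bounds[of u] by auto
  ultimately show ?thesis
  proof -
    assume dv: "int l dvd (dd n l v - dd n l u)" and ab: "\<bar>dd n l v - dd n l u\<bar> < int l"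
    show ?thesis
    proof (rule ccontr)
      assume "dd n l v \<noteq> dd n l u"
      then have "\<bar>int l\<bar> \<le> \<bar>dd n l v - dd n l u\<bar>" using dvd_imp_le_int[OF _ dv] by simp
      then show False using ab by simp
    qed
  qed
qed

lemma delta_pos_ne:
  assumes "(int n * (dd n l v - dd n l u)) mod (int n * int l) > 0"
  shows "dd n l v \<noteq> dd n l u"
  using assms by auto

end

lemma partI_of_diagram:
  assumes "diagram f = diagram g" "1 \<le> i"
  shows "partI f i = partI g i"
proof (rule ccontr)
  assume ne: "partI f i \<noteq> partI g i"
  then consider "partI f i < partI g i" | "partI g i < partI f i" by linarith
  then show False
  proof cases
    case 1
    then have "(i, partI g i) \<in> diagram g" "(i, partI g i) \<notin> diagram f"
      using assms(2) unfolding diagram_def by auto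
    then show False using assms(1) by simp
  next
    case 2
    then have "(i, partI f i) \<in> diagram f" "(i, partI f i) \<notin> diagram g"
      using assms(2) unfolding diagram_def by auto
    then show False using assms(1) by simp
  qed
qed

lemma diag_eq_of_NN:
  assumes f: "is_partition f" and g: "is_partition g" and e: "\<And>t. NN c f t = NN c g t"
  shows "diagram f = diagram g"
proof -
  have "partI f i = partI g i" if i: "1 \<le> i" for i
  proof -
    have "\<forall>t. t \<le> bd c f i \<longleftrightarrow> t \<le> bd c g i" using NN_iff[OF f i] NN_iff[OF g i] e by simp
    then have "bd c f i = bd c g i" by (meson order_antisym order_refl)
    then show ?thesis unfolding bd_def by simp
  qed
  then show ?thesis unfolding diagram_def by auto
qed

lemma NN_mono_sub:
  assumes f: "is_partition f" and g: "is_partition g" and sub: "diagram f \<subseteq> diagram g"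
  shows "NN c f t \<le> NN c g t"
proof -
  have "partI f i \<le> partI g i" if i: "1 \<le> i" for i
  proof (rule ccontr)
    assume "\<not> partI f i \<le> partI g i"
    then have "(i, partI f i) \<in> diagram f" "(i, partI f i) \<notin> diagram g"
      using i unfolding diagram_def by auto
    then show False using sub by auto
  qed
  then have "{i. 1 \<le> i \<and> t \<le> bd c f i} \<subseteq> {i. 1 \<le> i \<and> t \<le> bd c g i}"
    unfolding bd_def by force
  then show ?thesis unfolding NN_def by (intro card_mono finite_ge)
qed

lemma runner_set:
  assumes cor: "corresp n l ss lams lam" and b: "1 \<le> b" "b \<le> l"
  shows "Binf (ss ! (b - 1)) (lams ! (b - 1)) = phi n l ` {k \<in> Binf (sum_list ss) lam. dd n l k = int b}"
proof (rule set_eqI)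
  fix x
  define S1 where "S1 = {(int (partI (lams ! (b - 1)) i) + ss ! (b - 1) + 1 - int i, int b) | b i.
         1 \<le> b \<and> b \<le> l \<and> 1 \<le> i}"
  define S2 where "S2 = {(phi n l k, dd n l k) | k. k \<in> {int (partI lam i) + sum_list ss + 1 - int i | i. 1 \<le> i}}"
  have C: "S1 = S2" using cor unfolding corresp_def S1_def S2_def .
  have "x \<in> Binf (ss ! (b - 1)) (lams ! (b - 1)) \<longleftrightarrow> (\<exists>i. 1 \<le> i \<and> x = bd (ss ! (b - 1)) (lams ! (b - 1)) i)"
    unfolding Binf_def by blast
  also have "\<dots> \<longleftrightarrow> (x, int b) \<in> S1"
  proof
    assume "\<exists>i. 1 \<le> i \<and> x = bd (ss ! (b - 1)) (lams ! (b - 1)) i"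
    then obtain i where "1 \<le> i" "x = bd (ss ! (b - 1)) (lams ! (b - 1)) i" by blast
    then show "(x, int b) \<in> S1" unfolding S1_def bd_def using b by blast
  next
    assume "(x, int b) \<in> S1"
    then obtain b' i where "1 \<le> i" "(x, int b) = (int (partI (lams ! (b' - 1)) i) + ss ! (b' - 1) + 1 - int i, int b')"
      unfolding S1_def by blast
    then show "\<exists>i. 1 \<le> i \<and> x = bd (ss ! (b - 1)) (lams ! (b - 1)) i" unfolding bd_def by auto
  qed
  also have "\<dots> \<longleftrightarrow> (x, int b) \<in> S2" using C by simp
  also have "\<dots> \<longleftrightarrow> x \<in> phi n l ` {k \<in> Binf (sum_list ss) lam. dd n l k = int b}"
  proof
    assume "(x, int b) \<in> S2"
    then obtain k i where "1 \<le> i" "k = int (partI lam i) + sum_list ss + 1 - int i" "x = phi n l k" "int b = dd n l k"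
      unfolding S2_def by blast
    then show "x \<in> phi n l ` {k \<in> Binf (sum_list ss) lam. dd n l k = int b}"
      unfolding Binf_def bd_def by auto
  next
    assume "x \<in> phi n l ` {k \<in> Binf (sum_list ss) lam. dd n l k = int b}"
    then obtain k i where "1 \<le> i" "k = bd (sum_list ss) lam i" "x = phi n l k" "int b = dd n l k"
      unfolding Binf_def by auto
    then show "(x, int b) \<in> S2" unfolding S2_def bd_def by blast
  qed
  finally show "x \<in> Binf (ss ! (b - 1)) (lams ! (b - 1)) \<longleftrightarrow> x \<in> phi n l ` {k \<in> Binf (sum_list ss) lam. dd n l k = int b}" .
qed

lemma runner_ht:
  assumes n: "n \<ge> 1" and l: "l \<ge> 1"
    and f: "is_partition f" and g: "is_partition g"
    and Ng: "\<And>t. NN c g t = card {k \<in> Xg. dd n l k = b \<and> t \<le> phi n l k}"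
    and fin: "\<And>t. finite {k \<in> Xg. dd n l k = b \<and> t \<le> phi n l k}"
    and da: "dd n l a = b" and da': "dd n l a' = b" and aa: "a < a'"
    and HN: "\<And>t. int (NN c g t) = int (NN c f t) + of_bool (phi n l a < t \<and> t \<le> phi n l a') - e t"
    and e01: "\<And>t. e t = 0 \<or> e t = 1"
    and ez: "\<And>t. phi n l a < t \<Longrightarrow> t \<le> phi n l a' \<Longrightarrow> e t = 0"
  shows "ht (diagram g - diagram f) = int (card {k \<in> Xg. dd n l k = b \<and> a < k \<and> k < a'})"
proof -
  define p where "p = phi n l a"
  define p' where "p' = phi n l a'"
  have pp: "p < p'" unfolding p_def p'_def using phi_mono[OF n l _ aa] da da' by simp
  have H1: "NN c f t < NN c g t \<longleftrightarrow> p < t \<and> t \<le> p'" for t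
    using HN[of t] e01[of t] ez[of t] unfolding p_def p'_def
    by (cases "phi n l a < t \<and> t \<le> phi n l a'") auto
  have H2: "NN c g t = NN c f t + 1" if "p < t" "t \<le> p'" for t
    using HN[of t] ez[of t] that unfolding p_def p'_def by auto
  note ht = headtail[OF f g pp H1 H2]
  have split: "{k \<in> Xg. dd n l k = b \<and> p + 1 \<le> phi n l k} =
     {k \<in> Xg. dd n l k = b \<and> p' \<le> phi n l k} \<union> {k \<in> Xg. dd n l k = b \<and> a < k \<and> k < a'}"
  proof -
    have "p + 1 \<le> phi n l k \<longleftrightarrow> a < k" "p' \<le> phi n l k \<longleftrightarrow> a' \<le> k" if "dd n l k = b" for k
      using phi_less_iff[OF n l, of a k] phi_le_iff[OF n l, of a' k] that da da'
      unfolding p_def p'_def by auto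
    then show ?thesis using aa by auto
  qed
  have disj: "{k \<in> Xg. dd n l k = b \<and> p' \<le> phi n l k} \<inter> {k \<in> Xg. dd n l k = b \<and> a < k \<and> k < a'} = {}"
    using phi_le_iff[OF n l, of a'] da' unfolding p'_def by auto
  have fin2: "finite {k \<in> Xg. dd n l k = b \<and> a < k \<and> k < a'}"
  proof (rule finite_subset[OF _ fin[of "p + 1"]])
    show "{k \<in> Xg. dd n l k = b \<and> a < k \<and> k < a'} \<subseteq> {k \<in> Xg. dd n l k = b \<and> p + 1 \<le> phi n l k}"
      using split by blast
  qed
  have "NN c g (p + 1) = card ({k \<in> Xg. dd n l k = b \<and> p' \<le> phi n l k} \<union> {k \<in> Xg. dd n l k = b \<and> a < k \<and> k < a'})"
    unfolding Ng split[symmetric] ..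
  also have "\<dots> = card {k \<in> Xg. dd n l k = b \<and> p' \<le> phi n l k} + card {k \<in> Xg. dd n l k = b \<and> a < k \<and> k < a'}"
    by (rule card_Un_disjoint[OF fin fin2 disj])
  also have "card {k \<in> Xg. dd n l k = b \<and> p' \<le> phi n l k} = NN c g p'" by (rule Ng[symmetric])
  finally have "NN c g (p + 1) = NN c g p' + card {k \<in> Xg. dd n l k = b \<and> a < k \<and> k < a'}" .
  then show ?thesis unfolding ht_def using ht(1,2) by simp
qed

lemma rho_ident:
  assumes rp: "rho_pair l lams mus rho rho'"
    and bu: "1 \<le> bu" "bu \<le> l" and bv: "1 \<le> bv" "bv \<le> l"
    and Eq: "\<And>b. 1 \<le> b \<Longrightarrow> b \<le> l \<Longrightarrow> b \<noteq> bu \<Longrightarrow> b \<noteq> bv \<Longrightarrow>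
               diagram (lams ! (b - 1)) = diagram (mus ! (b - 1))"
    and Du: "diagram (lams ! (bu - 1)) \<noteq> diagram (mus ! (bu - 1))"
    and Dv: "diagram (lams ! (bv - 1)) \<noteq> diagram (mus ! (bv - 1))"
    and Or: "bu \<noteq> bv \<Longrightarrow> \<not> diagram (mus ! (bv - 1)) \<subseteq> diagram (lams ! (bv - 1))"
  shows "rho = diagram (lams ! (bu - 1)) - diagram (mus ! (bu - 1)) \<and>
         rho' = diagram (mus ! (bv - 1)) - diagram (lams ! (bv - 1))"
  using rp unfolding rho_pair_def
proof (elim disjE exE)
  fix d d' assume J: "condJ1 l lams mus d d' rho rho'"
  then have J': "d \<noteq> d'" "1 \<le> d" "d \<le> l" "1 \<le> d'" "d' \<le> l"
    "diagram (mus ! (d - 1)) \<subseteq> diagram (lams ! (d - 1))"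
    "rho = diagram (lams ! (d - 1)) - diagram (mus ! (d - 1))"
    "rho' = diagram (mus ! (d' - 1)) - diagram (lams ! (d' - 1))"
    "ribbon rho" "ribbon rho'" unfolding condJ1_def by auto
  have "rho \<noteq> {}" "rho' \<noteq> {}" using J'(9,10) unfolding ribbon_def by auto
  then have ne: "diagram (lams ! (d - 1)) \<noteq> diagram (mus ! (d - 1))"
    "diagram (lams ! (d' - 1)) \<noteq> diagram (mus ! (d' - 1))" using J'(7,8) by auto
  have dd: "d = bu \<or> d = bv" "d' = bu \<or> d' = bv" using Eq ne J' by blast+
  have buv: "bu \<noteq> bv" using dd J'(1) by auto
  have "d \<noteq> bv" using Or[OF buv] J'(6) by auto
  then have "d = bu" "d' = bv" using dd J'(1) by auto
  then show ?thesis using J' by simp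
next
  fix d assume J: "condJ2 l lams mus d rho rho'"
  then have J': "1 \<le> d" "d \<le> l"
    "\<forall>b. 1 \<le> b \<and> b \<le> l \<and> b \<noteq> d \<longrightarrow> lams ! (b - 1) = mus ! (b - 1)"
    "rho = diagram (lams ! (d - 1)) - (diagram (lams ! (d - 1)) \<inter> diagram (mus ! (d - 1)))"
    "rho' = diagram (mus ! (d - 1)) - (diagram (lams ! (d - 1)) \<inter> diagram (mus ! (d - 1)))"
    unfolding condJ2_def by auto
  have "d = bu" using J'(3) Du bu by metis
  moreover have "d = bv" using J'(3) Dv bv by metis
  ultimately show ?thesis using J' by auto
qed

context
  fixes n l m :: nat and ss :: "int list" and lams mus :: "nat list list" and lam mu :: "nat list"
    and u v H :: int
  assumes n: "n \<ge> 1" and l: "l \<ge> 1" and lss: "length ss = l"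
    and lams: "lams \<in> Pi_multi l m" and mus: "mus \<in> Pi_multi l m"
    and plam: "is_partition lam" and pmu: "is_partition mu"
    and cl: "corresp n l ss lams lam" and cm: "corresp n l ss mus mu"
    and r: "sum_list lam = sum_list mu"
    and uin: "u \<in> set (beta (sum_list ss) mu)" and vin: "v \<in> set (beta (sum_list ss) mu)"
    and Hp: "0 < H" and UV: "u + H < v - H"
    and sl: "set (beta (sum_list ss) lam) = (set (beta (sum_list ss) mu) - {u, v}) \<union> {u + H, v - H}"
    and n1: "u + H \<notin> set (beta (sum_list ss) mu) - {u, v}"
    and n2: "v - H \<notin> set (beta (sum_list ss) mu) - {u, v}"
begin

abbreviation "Xm \<equiv> Binf (sum_list ss) mu"
abbreviation "Xl \<equiv> Binf (sum_list ss) lam"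
abbreviation "Pset \<equiv> set (beta (sum_list ss) mu) - {u, v}"

lemma LX:
  shows "Xm = set (beta (sum_list ss) mu) \<union> {x. x \<le> sum_list ss - int (sum_list mu)}"
    "Xl = set (beta (sum_list ss) lam) \<union> {x. x \<le> sum_list ss - int (sum_list mu)}"
  using Binf_split[OF pmu] Binf_split[OF plam] r by auto

lemma XX: "Xl = (Xm - {u, v}) \<union> {u + H, v - H}"
  and memb: "u \<in> Xm" "v \<in> Xm" "u + H \<notin> Xm" "v - H \<notin> Xm"
proof -
  define L where "L = {x. x \<le> sum_list ss - int (sum_list mu)}"
  have gt: "x \<notin> L" if "x \<in> set (beta (sum_list ss) mu)" for x
    using beta_gt[OF pmu that] unfolding L_def by auto
  have uL: "u \<notin> L" "v \<notin> L" using gt uin vin by auto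
  have UL: "u + H \<notin> L" "v - H \<notin> L" using uL Hp UV unfolding L_def by auto
  show "Xl = (Xm - {u, v}) \<union> {u + H, v - H}" unfolding LX L_def[symmetric] sl using uL by auto
  show "u \<in> Xm" "v \<in> Xm" using uin vin unfolding LX by auto
  show "u + H \<notin> Xm" "v - H \<notin> Xm" using n1 n2 UL Hp UV unfolding LX L_def[symmetric] by auto
qed

lemma low: "k \<in> Xm \<Longrightarrow> u < k \<Longrightarrow> k \<in> set (beta (sum_list ss) mu)"
  using LX(1) beta_gt[OF pmu uin] by auto

lemma comp_part: "1 \<le> b \<Longrightarrow> b \<le> l \<Longrightarrow> is_partition (lams ! (b - 1)) \<and> is_partition (mus ! (b - 1))"
  using lams mus unfolding Pi_multi_def by (auto intro!: nth_mem)

lemma NN_runner: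
  assumes b: "1 \<le> b" "b \<le> l"
  shows "NN (ss ! (b - 1)) (lams ! (b - 1)) t = card {k \<in> Xl. dd n l k = int b \<and> t \<le> phi n l k}"
    "NN (ss ! (b - 1)) (mus ! (b - 1)) t = card {k \<in> Xm. dd n l k = int b \<and> t \<le> phi n l k}"
    "finite {k \<in> Xm. dd n l k = int b \<and> t \<le> phi n l k}"
    "finite {k \<in> Xl. dd n l k = int b \<and> t \<le> phi n l k}"
proof -
  have gen: "NN (ss ! (b - 1)) q t = card {k \<in> X. dd n l k = int b \<and> t \<le> phi n l k}
      \<and> finite {k \<in> X. dd n l k = int b \<and> t \<le> phi n l k}"
    if q: "is_partition q" and bs: "Binf (ss ! (b - 1)) q = phi n l ` {k \<in> X. dd n l k = int b}" for q X
  proof -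
    have im: "{x \<in> Binf (ss ! (b - 1)) q. t \<le> x} = phi n l ` {k \<in> X. dd n l k = int b \<and> t \<le> phi n l k}"
      unfolding bs by auto
    have inj: "inj_on (phi n l) {k \<in> X. dd n l k = int b \<and> t \<le> phi n l k}"
      using phi_inj[OF n l, of "int b"] by (rule inj_on_subset) auto
    have "NN (ss ! (b - 1)) q t = card {k \<in> X. dd n l k = int b \<and> t \<le> phi n l k}"
      unfolding NN_Binf[OF q] im using card_image[OF inj] .
    moreover have "finite {k \<in> X. dd n l k = int b \<and> t \<le> phi n l k}"
      using finite_Binf_ge[of "ss ! (b - 1)" q t] unfolding im using finite_image_iff[OF inj] by simp
    ultimately show ?thesis by simp
  qed
  show "NN (ss ! (b - 1)) (lams ! (b - 1)) t = card {k \<in> Xl. dd n l k = int b \<and> t \<le> phi n l k}"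
    "finite {k \<in> Xl. dd n l k = int b \<and> t \<le> phi n l k}"
    using gen[OF _ runner_set[OF cl b]] comp_part[OF b] by auto
  show "NN (ss ! (b - 1)) (mus ! (b - 1)) t = card {k \<in> Xm. dd n l k = int b \<and> t \<le> phi n l k}"
    "finite {k \<in> Xm. dd n l k = int b \<and> t \<le> phi n l k}"
    using gen[OF _ runner_set[OF cm b]] comp_part[OF b] by auto
qed

lemma swapN:
  assumes b: "1 \<le> b" "b \<le> l"
  shows "int (NN (ss ! (b - 1)) (lams ! (b - 1)) t) = int (NN (ss ! (b - 1)) (mus ! (b - 1)) t)
     - of_bool (dd n l u = int b \<and> t \<le> phi n l u) - of_bool (dd n l v = int b \<and> t \<le> phi n l v)
     + of_bool (dd n l (u + H) = int b \<and> t \<le> phi n l (u + H))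
     + of_bool (dd n l (v - H) = int b \<and> t \<le> phi n l (v - H))"
  unfolding NN_runner(1,2)[OF b] XX
  by (rule card_swap2) (use NN_runner(3)[OF b] memb Hp UV in auto)

lemma NN_eq_diag:
  assumes b: "1 \<le> b" "b \<le> l" and e: "\<And>t. NN (ss ! (b - 1)) (lams ! (b - 1)) t = NN (ss ! (b - 1)) (mus ! (b - 1)) t"
  shows "diagram (lams ! (b - 1)) = diagram (mus ! (b - 1))"
  using diag_eq_of_NN comp_part[OF b] e by blast

lemma diag_ne:
  assumes b: "1 \<le> b" "b \<le> l" and e: "NN (ss ! (b - 1)) (lams ! (b - 1)) t \<noteq> NN (ss ! (b - 1)) (mus ! (b - 1)) t"
  shows "diagram (lams ! (b - 1)) \<noteq> diagram (mus ! (b - 1))"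
  using NN_mono_sub[of "lams ! (b - 1)" "mus ! (b - 1)" "ss ! (b - 1)" t]
    NN_mono_sub[of "mus ! (b - 1)" "lams ! (b - 1)" "ss ! (b - 1)" t] comp_part[OF b] e by auto

lemma bnat: "1 \<le> nat (dd n l k)" "nat (dd n l k) \<le> l" "int (nat (dd n l k)) = dd n l k"
  using dd_bounds[OF n l, of k] by auto

lemma ob_int: fixes a b t :: int shows "a < b \<Longrightarrow> (of_bool (t \<le> b) :: int) - of_bool (t \<le> a) = of_bool (a < t \<and> t \<le> b)"
  by auto

lemma ht_same:
  assumes rp: "rho_pair l lams mus rho rho'"
    and sU: "dd n l (u + H) = dd n l u" and sV: "dd n l (v - H) = dd n l v"
  shows "ht rho + ht rho' = int (card {k \<in> Pset. dd n l k = dd n l u \<and> u < k \<and> k < u + H})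
           + int (card {k \<in> Pset. dd n l k = dd n l v \<and> v - H < k \<and> k < v})"
proof -
  define bu where "bu = nat (dd n l u)"
  define bv where "bv = nat (dd n l v)"
  define U where "U = u + H"
  define V where "V = v - H"
  have bu: "1 \<le> bu" "bu \<le> l" "int bu = dd n l u" unfolding bu_def using bnat by auto
  have bv: "1 \<le> bv" "bv \<le> l" "int bv = dd n l v" unfolding bv_def using bnat by auto
  have uU: "phi n l u < phi n l U" using phi_mono[OF n l _, of u U] sU Hp unfolding U_def by simp
  have Vv: "phi n l V < phi n l v" using phi_mono[OF n l _, of V v] sV Hp unfolding V_def by simp
  have UVs: "dd n l v = dd n l u \<Longrightarrow> phi n l U < phi n l V"
    using phi_mono[OF n l _, of U V] sU sV UV unfolding U_def V_def by simp
  have Uv: "phi n l U < phi n l v \<or> dd n l v \<noteq> dd n l u" using UVs Vv by auto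
  define e1 where "e1 t = (of_bool (dd n l v = dd n l u \<and> phi n l V < t \<and> t \<le> phi n l v) :: int)" for t
  define e2 where "e2 t = (of_bool (dd n l v = dd n l u \<and> phi n l u < t \<and> t \<le> phi n l U) :: int)" for t
  have HNu: "int (NN (ss ! (bu - 1)) (lams ! (bu - 1)) t) = int (NN (ss ! (bu - 1)) (mus ! (bu - 1)) t)
      + of_bool (phi n l u < t \<and> t \<le> phi n l U) - e1 t" for t
  proof -
    have "int (NN (ss ! (bu - 1)) (lams ! (bu - 1)) t) = int (NN (ss ! (bu - 1)) (mus ! (bu - 1)) t)
      + (of_bool (t \<le> phi n l U) - of_bool (t \<le> phi n l u))
      - of_bool (dd n l v = dd n l u) * (of_bool (t \<le> phi n l v) - of_bool (t \<le> phi n l V))"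
      using swapN[OF bu(1,2), of t] bu(3) sU sV unfolding U_def V_def by (cases "dd n l v = dd n l u") auto
    then show ?thesis unfolding e1_def using ob_int[OF uU] ob_int[OF Vv] by (cases "dd n l v = dd n l u") auto
  qed
  have HNv: "int (NN (ss ! (bv - 1)) (mus ! (bv - 1)) t) = int (NN (ss ! (bv - 1)) (lams ! (bv - 1)) t)
      + of_bool (phi n l V < t \<and> t \<le> phi n l v) - e2 t" for t
  proof -
    have "int (NN (ss ! (bv - 1)) (lams ! (bv - 1)) t) = int (NN (ss ! (bv - 1)) (mus ! (bv - 1)) t)
      - (of_bool (t \<le> phi n l v) - of_bool (t \<le> phi n l V))
      + of_bool (dd n l v = dd n l u) * (of_bool (t \<le> phi n l U) - of_bool (t \<le> phi n l u))"
      using swapN[OF bv(1,2), of t] bv(3) sU sV unfolding U_def V_def by (cases "dd n l v = dd n l u") auto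
    then show ?thesis unfolding e2_def using ob_int[OF uU] ob_int[OF Vv] by (cases "dd n l v = dd n l u") auto
  qed
  have cpu: "is_partition (lams ! (bu - 1))" "is_partition (mus ! (bu - 1))" using comp_part[OF bu(1,2)] by auto
  have cpv: "is_partition (lams ! (bv - 1))" "is_partition (mus ! (bv - 1))" using comp_part[OF bv(1,2)] by auto
  have ht1: "ht (diagram (lams ! (bu - 1)) - diagram (mus ! (bu - 1)))
      = int (card {k \<in> Xl. dd n l k = dd n l u \<and> u < k \<and> k < U})"
  proof (rule runner_ht[OF n l cpu(2) cpu(1), where e = e1])
    show "\<And>t. NN (ss ! (bu - 1)) (lams ! (bu - 1)) t = card {k \<in> Xl. dd n l k = dd n l u \<and> t \<le> phi n l k}"
      using NN_runner(1)[OF bu(1,2)] bu(3) by simp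
    show "\<And>t. finite {k \<in> Xl. dd n l k = dd n l u \<and> t \<le> phi n l k}"
      using NN_runner(4)[OF bu(1,2)] bu(3) by simp
    show "dd n l u = dd n l u" "dd n l U = dd n l u" "u < U" using sU Hp unfolding U_def by auto
    show "\<And>t. e1 t = 0 \<or> e1 t = 1" unfolding e1_def by auto
    show "\<And>t. phi n l u < t \<Longrightarrow> t \<le> phi n l U \<Longrightarrow> e1 t = 0" unfolding e1_def using UVs by auto
  qed (rule HNu)
  have ht2: "ht (diagram (mus ! (bv - 1)) - diagram (lams ! (bv - 1)))
      = int (card {k \<in> Xm. dd n l k = dd n l v \<and> V < k \<and> k < v})"
  proof (rule runner_ht[OF n l cpv(1) cpv(2), where e = e2])
    show "\<And>t. NN (ss ! (bv - 1)) (mus ! (bv - 1)) t = card {k \<in> Xm. dd n l k = dd n l v \<and> t \<le> phi n l k}"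
      using NN_runner(2)[OF bv(1,2)] bv(3) by simp
    show "\<And>t. finite {k \<in> Xm. dd n l k = dd n l v \<and> t \<le> phi n l k}"
      using NN_runner(3)[OF bv(1,2)] bv(3) by simp
    show "dd n l V = dd n l v" "dd n l v = dd n l v" "V < v" using sV Hp unfolding V_def by auto
    show "\<And>t. e2 t = 0 \<or> e2 t = 1" unfolding e2_def by auto
    show "\<And>t. phi n l V < t \<Longrightarrow> t \<le> phi n l v \<Longrightarrow> e2 t = 0" unfolding e2_def using UVs by auto
  qed (rule HNv)
  have ri: "rho = diagram (lams ! (bu - 1)) - diagram (mus ! (bu - 1)) \<and>
         rho' = diagram (mus ! (bv - 1)) - diagram (lams ! (bv - 1))"
  proof (rule rho_ident[OF rp bu(1,2) bv(1,2)])
    fix b assume b: "1 \<le> b" "b \<le> l" "b \<noteq> bu" "b \<noteq> bv"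
    have "int b \<noteq> dd n l u" "int b \<noteq> dd n l v" using b bu(3) bv(3) by auto
    then have "NN (ss ! (b - 1)) (lams ! (b - 1)) t = NN (ss ! (b - 1)) (mus ! (b - 1)) t" for t
      using swapN[OF b(1,2), of t] sU sV by simp
    then show "diagram (lams ! (b - 1)) = diagram (mus ! (b - 1))" by (rule NN_eq_diag[OF b(1,2)])
  next
    have "e1 (phi n l U) = 0" unfolding e1_def using UVs by auto
    then have "int (NN (ss ! (bu - 1)) (lams ! (bu - 1)) (phi n l U)) = int (NN (ss ! (bu - 1)) (mus ! (bu - 1)) (phi n l U)) + 1"
      using HNu[of "phi n l U"] uU by simp
    then show "diagram (lams ! (bu - 1)) \<noteq> diagram (mus ! (bu - 1))" by (intro diag_ne[OF bu(1,2), where t = "phi n l U"]) auto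
  next
    have e2v: "e2 (phi n l v) = 0" unfolding e2_def using Uv by auto
    then have "int (NN (ss ! (bv - 1)) (mus ! (bv - 1)) (phi n l v)) = int (NN (ss ! (bv - 1)) (lams ! (bv - 1)) (phi n l v)) + 1"
      using HNv[of "phi n l v"] Vv by simp
    then show "diagram (lams ! (bv - 1)) \<noteq> diagram (mus ! (bv - 1))" by (intro diag_ne[OF bv(1,2), where t = "phi n l v"]) auto
    show "bu \<noteq> bv \<Longrightarrow> \<not> diagram (mus ! (bv - 1)) \<subseteq> diagram (lams ! (bv - 1))"
      using NN_mono_sub[OF cpv(2) cpv(1), of "ss ! (bv - 1)" "phi n l v"]
        \<open>int (NN (ss ! (bv - 1)) (mus ! (bv - 1)) (phi n l v)) = int (NN (ss ! (bv - 1)) (lams ! (bv - 1)) (phi n l v)) + 1\<close>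
      by auto
  qed
  have c1: "{k \<in> Xl. dd n l k = dd n l u \<and> u < k \<and> k < U} = {k \<in> Pset. dd n l k = dd n l u \<and> u < k \<and> k < U}"
    using XX low LX(1) UV Hp unfolding U_def by auto
  have c2: "{k \<in> Xm. dd n l k = dd n l v \<and> V < k \<and> k < v} = {k \<in> Pset. dd n l k = dd n l v \<and> V < k \<and> k < v}"
    using low LX(1) UV Hp beta_gt[OF pmu uin] unfolding V_def by auto
  show ?thesis using ri ht1 ht2 c1 c2 unfolding U_def V_def by simp
qed

lemma ht_cross:
  assumes rp: "rho_pair l lams mus rho rho'"
    and cU: "dd n l (u + H) = dd n l v" and cV: "dd n l (v - H) = dd n l u" and ne: "dd n l u \<noteq> dd n l v"
  shows "ht rho + ht rho' = int (card {k \<in> Pset. dd n l k = dd n l u \<and> u < k \<and> k < v - H})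
           + int (card {k \<in> Pset. dd n l k = dd n l v \<and> u + H < k \<and> k < v})"
proof -
  define bu where "bu = nat (dd n l u)"
  define bv where "bv = nat (dd n l v)"
  define U where "U = u + H"
  define V where "V = v - H"
  have bu: "1 \<le> bu" "bu \<le> l" "int bu = dd n l u" unfolding bu_def using bnat by auto
  have bv: "1 \<le> bv" "bv \<le> l" "int bv = dd n l v" unfolding bv_def using bnat by auto
  have uV: "phi n l u < phi n l V" using phi_mono[OF n l _, of u V] cV Hp UV unfolding V_def by simp
  have Uv: "phi n l U < phi n l v" using phi_mono[OF n l _, of U v] cU Hp UV unfolding U_def by simp
  have HNu: "int (NN (ss ! (bu - 1)) (lams ! (bu - 1)) t) = int (NN (ss ! (bu - 1)) (mus ! (bu - 1)) t)
      + of_bool (phi n l u < t \<and> t \<le> phi n l V) - 0" for t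
    using swapN[OF bu(1,2), of t] bu(3) cU cV ne ob_int[OF uV, of t] unfolding U_def V_def by auto
  have HNv: "int (NN (ss ! (bv - 1)) (mus ! (bv - 1)) t) = int (NN (ss ! (bv - 1)) (lams ! (bv - 1)) t)
      + of_bool (phi n l U < t \<and> t \<le> phi n l v) - 0" for t
    using swapN[OF bv(1,2), of t] bv(3) cU cV ne ob_int[OF Uv, of t] unfolding U_def V_def by auto
  have cpu: "is_partition (lams ! (bu - 1))" "is_partition (mus ! (bu - 1))" using comp_part[OF bu(1,2)] by auto
  have cpv: "is_partition (lams ! (bv - 1))" "is_partition (mus ! (bv - 1))" using comp_part[OF bv(1,2)] by auto
  have ht1: "ht (diagram (lams ! (bu - 1)) - diagram (mus ! (bu - 1)))
      = int (card {k \<in> Xl. dd n l k = dd n l u \<and> u < k \<and> k < V})"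
  proof (rule runner_ht[OF n l cpu(2) cpu(1), where e = "\<lambda>_. 0"])
    show "\<And>t. NN (ss ! (bu - 1)) (lams ! (bu - 1)) t = card {k \<in> Xl. dd n l k = dd n l u \<and> t \<le> phi n l k}"
      using NN_runner(1)[OF bu(1,2)] bu(3) by simp
    show "\<And>t. finite {k \<in> Xl. dd n l k = dd n l u \<and> t \<le> phi n l k}"
      using NN_runner(4)[OF bu(1,2)] bu(3) by simp
    show "dd n l u = dd n l u" "dd n l V = dd n l u" "u < V" using cV Hp UV unfolding V_def by auto
  qed (use HNu in auto)
  have ht2: "ht (diagram (mus ! (bv - 1)) - diagram (lams ! (bv - 1)))
      = int (card {k \<in> Xm. dd n l k = dd n l v \<and> U < k \<and> k < v})"
  proof (rule runner_ht[OF n l cpv(1) cpv(2), where e = "\<lambda>_. 0"])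
    show "\<And>t. NN (ss ! (bv - 1)) (mus ! (bv - 1)) t = card {k \<in> Xm. dd n l k = dd n l v \<and> t \<le> phi n l k}"
      using NN_runner(2)[OF bv(1,2)] bv(3) by simp
    show "\<And>t. finite {k \<in> Xm. dd n l k = dd n l v \<and> t \<le> phi n l k}"
      using NN_runner(3)[OF bv(1,2)] bv(3) by simp
    show "dd n l U = dd n l v" "dd n l v = dd n l v" "U < v" using cU Hp UV unfolding U_def by auto
  qed (use HNv in auto)
  have Nv: "int (NN (ss ! (bv - 1)) (mus ! (bv - 1)) (phi n l v)) = int (NN (ss ! (bv - 1)) (lams ! (bv - 1)) (phi n l v)) + 1"
    using HNv[of "phi n l v"] Uv by simp
  have ri: "rho = diagram (lams ! (bu - 1)) - diagram (mus ! (bu - 1)) \<and>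
         rho' = diagram (mus ! (bv - 1)) - diagram (lams ! (bv - 1))"
  proof (rule rho_ident[OF rp bu(1,2) bv(1,2)])
    fix b assume b: "1 \<le> b" "b \<le> l" "b \<noteq> bu" "b \<noteq> bv"
    have "int b \<noteq> dd n l u" "int b \<noteq> dd n l v" using b bu(3) bv(3) by auto
    then have "NN (ss ! (b - 1)) (lams ! (b - 1)) t = NN (ss ! (b - 1)) (mus ! (b - 1)) t" for t
      using swapN[OF b(1,2), of t] cU cV by simp
    then show "diagram (lams ! (b - 1)) = diagram (mus ! (b - 1))" by (rule NN_eq_diag[OF b(1,2)])
  next
    have "int (NN (ss ! (bu - 1)) (lams ! (bu - 1)) (phi n l V)) = int (NN (ss ! (bu - 1)) (mus ! (bu - 1)) (phi n l V)) + 1"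
      using HNu[of "phi n l V"] uV by simp
    then show "diagram (lams ! (bu - 1)) \<noteq> diagram (mus ! (bu - 1))" by (intro diag_ne[OF bu(1,2), where t = "phi n l V"]) auto
  next
    show "diagram (lams ! (bv - 1)) \<noteq> diagram (mus ! (bv - 1))" using Nv by (intro diag_ne[OF bv(1,2), where t = "phi n l v"]) auto
    show "bu \<noteq> bv \<Longrightarrow> \<not> diagram (mus ! (bv - 1)) \<subseteq> diagram (lams ! (bv - 1))"
      using NN_mono_sub[OF cpv(2) cpv(1), of "ss ! (bv - 1)" "phi n l v"] Nv by auto
  qed
  have c1: "{k \<in> Xl. dd n l k = dd n l u \<and> u < k \<and> k < V} = {k \<in> Pset. dd n l k = dd n l u \<and> u < k \<and> k < V}"
    using XX low LX(1) UV Hp cU ne unfolding U_def V_def by auto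
  have c2: "{k \<in> Xm. dd n l k = dd n l v \<and> U < k \<and> k < v} = {k \<in> Pset. dd n l k = dd n l v \<and> U < k \<and> k < v}"
    using low LX(1) UV Hp beta_gt[OF pmu uin] unfolding U_def by auto
  show ?thesis using ri ht1 ht2 c1 c2 unfolding U_def V_def by simp
qed

end

definition Icnt :: "(int \<Rightarrow> int) \<Rightarrow> int set \<Rightarrow> nat" where
  "Icnt d S = card {(x, y). x \<in> S \<and> y \<in> S \<and> y < x \<and> d x < d y}"

definition fI :: "(int \<Rightarrow> int) \<Rightarrow> int \<Rightarrow> int \<Rightarrow> int" where
  "fI d x y = of_bool (y < x \<and> d x < d y)"

definition wI :: "(int \<Rightarrow> int) \<Rightarrow> int \<Rightarrow> int \<Rightarrow> int" where
  "wI d a x = fI d x a + fI d a x"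

lemma Icnt_sum:
  assumes "finite S"
  shows "int (Icnt d S) = (\<Sum>x\<in>S. \<Sum>y\<in>S. fI d x y)"
proof -
  have "{(x, y). x \<in> S \<and> y \<in> S \<and> y < x \<and> d x < d y} = (S \<times> S) \<inter> {p. snd p < fst p \<and> d (fst p) < d (snd p)}"
    by auto
  then have "int (Icnt d S) = (\<Sum>p\<in>S \<times> S. of_bool (snd p < fst p \<and> d (fst p) < d (snd p)))"
    unfolding Icnt_def using assms by simp
  also have "\<dots> = (\<Sum>(x, y)\<in>S \<times> S. fI d x y)"
    by (rule sum.cong) (auto simp: fI_def)
  also have "\<dots> = (\<Sum>x\<in>S. \<Sum>y\<in>S. fI d x y)"
    by (rule sum.cartesian_product[symmetric])
  finally show ?thesis .
qed

lemma Icnt_ins2: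
  assumes fin: "finite P" and a: "a \<notin> P" and b: "b \<notin> P" and ab: "a \<noteq> b"
  shows "int (Icnt d (P \<union> {a, b})) = int (Icnt d P) + (\<Sum>x\<in>P. wI d a x + wI d b x) + (fI d a b + fI d b a)"
proof -
  have S: "P \<union> {a, b} = insert a (insert b P)" by auto
  have faa: "fI d a a = 0" "fI d b b = 0" unfolding fI_def by auto
  have "int (Icnt d (P \<union> {a, b})) = (\<Sum>x\<in>insert a (insert b P). \<Sum>y\<in>insert a (insert b P). fI d x y)"
    unfolding S using Icnt_sum fin by simp
  also have "\<dots> = (\<Sum>x\<in>insert a (insert b P). fI d x a + fI d x b + (\<Sum>y\<in>P. fI d x y))"
    using fin a b ab by (simp add: algebra_simps)
  also have "\<dots> = (fI d a a + fI d a b + (\<Sum>y\<in>P. fI d a y)) + (fI d b a + fI d b b + (\<Sum>y\<in>P. fI d b y))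
      + (\<Sum>x\<in>P. fI d x a + fI d x b + (\<Sum>y\<in>P. fI d x y))"
    using fin a b ab by simp
  also have "(\<Sum>x\<in>P. fI d x a + fI d x b + (\<Sum>y\<in>P. fI d x y)) =
      (\<Sum>x\<in>P. fI d x a) + (\<Sum>x\<in>P. fI d x b) + int (Icnt d P)"
    using Icnt_sum[OF fin] by (simp add: sum.distrib)
  finally show ?thesis unfolding wI_def using faa by (simp add: sum.distrib algebra_simps)
qed

lemma w_pair:
  assumes aa: "a < a'" and d: "d a = d a'" and x: "x \<noteq> a" "x \<noteq> a'"
  shows "even (wI d a x + wI d a' x - of_bool (a < x \<and> x < a' \<and> d x \<noteq> d a))"
proof -
  consider "x < a" | "a < x \<and> x < a'" | "a' < x" using x by linarith
  then show ?thesis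
  proof cases
    case 1 then show ?thesis using aa d unfolding wI_def fI_def by auto
  next
    case 2 then show ?thesis using aa d unfolding wI_def fI_def by (cases "d x < d a"; cases "d a < d x") auto
  next
    case 3 then show ?thesis using aa d unfolding wI_def fI_def by auto
  qed
qed

lemma w_sum:
  assumes fin: "finite P" and aa: "a < a'" and d: "d a = d a'" and x: "a \<notin> P" "a' \<notin> P"
  shows "even ((\<Sum>x\<in>P. wI d a x + wI d a' x) - int (card {x \<in> P. a < x \<and> x < a' \<and> d x \<noteq> d a}))"
proof -
  have "(\<Sum>x\<in>P. (of_bool (a < x \<and> x < a' \<and> d x \<noteq> d a) :: int)) = int (card {x \<in> P. a < x \<and> x < a' \<and> d x \<noteq> d a})"
    using fin by (simp add: Int_def)
  moreover have "even ((\<Sum>x\<in>P. wI d a x + wI d a' x) - (\<Sum>x\<in>P. (of_bool (a < x \<and> x < a' \<and> d x \<noteq> d a) :: int)))"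
    unfolding sum_subtractf[symmetric]
  proof (rule dvd_sum)
    fix y assume "y \<in> P"
    then have "y \<noteq> a" "y \<noteq> a'" using x by auto
    then show "even (wI d a y + wI d a' y - of_bool (a < y \<and> y < a' \<and> d y \<noteq> d a))"
      using w_pair[OF aa d] by blast
  qed
  ultimately show ?thesis by simp
qed

lemma Ipar_same:
  assumes fin: "finite P" and o: "u < U" "U < V" "V < v"
    and nP: "u \<notin> P" "U \<notin> P" "V \<notin> P" "v \<notin> P"
    and dU: "d U = d u" and dV: "d V = d v"
  shows "even (int (Icnt d (P \<union> {u, v})) + int (Icnt d (P \<union> {U, V}))
     - int (card {x \<in> P. u < x \<and> x < U \<and> d x \<noteq> d u}) - int (card {x \<in> P. V < x \<and> x < v \<and> d x \<noteq> d v}))"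
proof -
  have e1: "even ((\<Sum>x\<in>P. wI d u x + wI d U x) - int (card {x \<in> P. u < x \<and> x < U \<and> d x \<noteq> d u}))"
    using w_sum[OF fin o(1) dU[symmetric] nP(1,2)] .
  have e2: "even ((\<Sum>x\<in>P. wI d V x + wI d v x) - int (card {x \<in> P. V < x \<and> x < v \<and> d x \<noteq> d V}))"
    using w_sum[OF fin o(3) dV nP(3,4)] .
  have pm: "fI d u v + fI d v u + (fI d U V + fI d V U) = 2 * of_bool (d v < d u)"
    using o dU dV unfolding fI_def by auto
  have "int (Icnt d (P \<union> {u, v})) + int (Icnt d (P \<union> {U, V})) =
     2 * int (Icnt d P) + (\<Sum>x\<in>P. wI d u x + wI d U x) + (\<Sum>x\<in>P. wI d V x + wI d v x)
     + 2 * of_bool (d v < d u)"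
    using Icnt_ins2[OF fin nP(1,4), of d] Icnt_ins2[OF fin nP(2,3), of d] o pm
    by (simp add: sum.distrib algebra_simps)
  then have eq: "int (Icnt d (P \<union> {u, v})) + int (Icnt d (P \<union> {U, V}))
     - int (card {x \<in> P. u < x \<and> x < U \<and> d x \<noteq> d u}) - int (card {x \<in> P. V < x \<and> x < v \<and> d x \<noteq> d v})
     = 2 * (int (Icnt d P) + of_bool (d v < d u))
       + ((\<Sum>x\<in>P. wI d u x + wI d U x) - int (card {x \<in> P. u < x \<and> x < U \<and> d x \<noteq> d u}))
       + ((\<Sum>x\<in>P. wI d V x + wI d v x) - int (card {x \<in> P. V < x \<and> x < v \<and> d x \<noteq> d V}))"
    using dV by simp
  show ?thesis by (subst eq) (intro dvd_add e1 e2, simp)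
qed

lemma Ipar_cross:
  assumes fin: "finite P" and o: "u < U" "U < V" "V < v"
    and nP: "u \<notin> P" "U \<notin> P" "V \<notin> P" "v \<notin> P"
    and dU: "d U = d v" and dV: "d V = d u" and ne: "d u \<noteq> d v"
  shows "even (int (Icnt d (P \<union> {u, v})) + int (Icnt d (P \<union> {U, V}))
     - 1 - int (card {x \<in> P. u < x \<and> x < V \<and> d x \<noteq> d u}) - int (card {x \<in> P. U < x \<and> x < v \<and> d x \<noteq> d v}))"
proof -
  have uV: "u < V" "U < v" using o by auto
  have e1: "even ((\<Sum>x\<in>P. wI d u x + wI d V x) - int (card {x \<in> P. u < x \<and> x < V \<and> d x \<noteq> d u}))"
    using w_sum[OF fin uV(1) dV[symmetric] nP(1,3)] .
  have e2: "even ((\<Sum>x\<in>P. wI d U x + wI d v x) - int (card {x \<in> P. U < x \<and> x < v \<and> d x \<noteq> d U}))"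
    using w_sum[OF fin uV(2) dU nP(2,4)] .
  have pm: "fI d u v + fI d v u + (fI d U V + fI d V U) = 1"
    using o dU dV ne unfolding fI_def by auto
  have "int (Icnt d (P \<union> {u, v})) + int (Icnt d (P \<union> {U, V})) =
     2 * int (Icnt d P) + (\<Sum>x\<in>P. wI d u x + wI d V x) + (\<Sum>x\<in>P. wI d U x + wI d v x) + 1"
    using Icnt_ins2[OF fin nP(1,4), of d] Icnt_ins2[OF fin nP(2,3), of d] o pm
    by (simp add: sum.distrib algebra_simps)
  then have eq: "int (Icnt d (P \<union> {u, v})) + int (Icnt d (P \<union> {U, V}))
     - 1 - int (card {x \<in> P. u < x \<and> x < V \<and> d x \<noteq> d u}) - int (card {x \<in> P. U < x \<and> x < v \<and> d x \<noteq> d v})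
     = 2 * int (Icnt d P)
       + ((\<Sum>x\<in>P. wI d u x + wI d V x) - int (card {x \<in> P. u < x \<and> x < V \<and> d x \<noteq> d u}))
       + ((\<Sum>x\<in>P. wI d U x + wI d v x) - int (card {x \<in> P. U < x \<and> x < v \<and> d x \<noteq> d U}))"
    using dU by simp
  show ?thesis by (subst eq) (intro dvd_add e1 e2, simp)
qed

lemma neg1pow_add: "neg1pow (a + b) = neg1pow a * neg1pow b"
  unfolding neg1pow_def by auto

lemma neg1pow_eq: "even (a - b) \<Longrightarrow> neg1pow a = neg1pow b"
  unfolding neg1pow_def by (metis dvd_add_right_iff diff_add_cancel)

lemma cardsplit:
  assumes "finite P"
  shows "card {x \<in> P. Q x \<and> A x \<and> B x} + card {x \<in> P. A x \<and> B x \<and> \<not> Q x} = card {x \<in> P. A x \<and> B x}"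
proof -
  have "{x \<in> P. A x \<and> B x} = {x \<in> P. Q x \<and> A x \<and> B x} \<union> {x \<in> P. A x \<and> B x \<and> \<not> Q x}" by auto
  moreover have "{x \<in> P. Q x \<and> A x \<and> B x} \<inter> {x \<in> P. A x \<and> B x \<and> \<not> Q x} = {}" by auto
  ultimately show ?thesis using assms by (simp add: card_Un_disjoint)
qed

lemma cardsplit2:
  fixes P :: "int set"
  assumes "finite P" "a \<le> b" "b \<le> c" "b \<notin> P"
  shows "card {x \<in> P. a < x \<and> x < c} = card {x \<in> P. a < x \<and> x < b} + card {x \<in> P. b < x \<and> x < c}"
proof -
  have nb: "\<forall>x\<in>P. x \<noteq> b" using assms(4) by auto
  have "{x \<in> P. a < x \<and> x < c} = {x \<in> P. a < x \<and> x < b} \<union> {x \<in> P. b < x \<and> x < c}"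
    using assms(2,3) nb by force
  moreover have "{x \<in> P. a < x \<and> x < b} \<inter> {x \<in> P. b < x \<and> x < c} = {}" by auto
  ultimately show ?thesis using assms by (simp add: card_Un_disjoint)
qed

theorem mainTheorem17:
  fixes n l m :: nat and ss :: "int list"
    and lams mus :: "nat list list" and lam mu :: "nat list"
    and rho rho' :: "(nat \<times> nat) set" and kss :: "int list list"
  assumes "n \<ge> 1" and "l \<ge> 1" and "m \<ge> 1" and "length ss = l"
    and "lams \<in> Pi_multi l m" and "mus \<in> Pi_multi l m"
    and "is_partition lam" and "is_partition mu"
    and "condH n l ss lams mus lam mu"
    and "rho_pair l lams mus rho rho'"
    and "(gammaH n l (sum_list ss) lam mu, deltaH n l (sum_list ss) lam mu) \<noteq> (0, 0)"
    and "\<exists>\<eta>\<in>{gammaH n l (sum_list ss) lam mu, deltaH n l (sum_list ss) lam mu}.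
           [hH lam mu = \<eta>] (mod (int n * int l))"
    and "good_seq n l (sum_list ss) lam mu kss"
  shows "neg1pow (int (length kss - 1) - 1)
         = neg1pow (ht rho + ht rho') * eps_LM n l (sum_list ss) lam mu
           * (if deltaH n l (sum_list ss) lam mu > 0 \<and>
                 [hH lam mu = deltaH n l (sum_list ss) lam mu] (mod (int n * int l))
              then 1 else -1)"
proof -
  note as = assms
  have n: "n \<ge> 1" and l: "l \<ge> 1" using as by auto
  define s where "s = sum_list ss"
  have cH: "corresp n l ss lams lam" "corresp n l ss mus mu" "sum_list lam = sum_list mu"
    using as(9) unfolding condH_def by auto
  have plam: "is_partition lam" and pmu: "is_partition mu" using as by auto
  have dm: "sorted_wrt (>) (beta s mu)" and dl: "sorted_wrt (>) (beta s lam)"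
    using beta_dec plam pmu by auto
  obtain u v H where uvH: "u \<in> set (beta s mu)" "v \<in> set (beta s mu)" "0 < H" "u + H < v - H"
     "set (beta s lam) = (set (beta s mu) - {u, v}) \<union> {u + H, v - H}"
     "u + H \<notin> set (beta s mu) - {u, v}" "v - H \<notin> set (beta s mu) - {u, v}"
     and par: "even (int (length kss - 1) - 1 - int (PR (length (beta s mu))) - 1 -
       int (card ((set (beta s mu) - {u, v}) \<inter> ({u<..<u + H} \<union> {v - H<..<v}))))"
    using seq_parity[OF n l as(13)[folded s_def] dm dl] by blast
  note geo = lam_mu_geom[OF plam pmu cH(3) uvH(1-7)]
  define N where "N = int n * int l"
  define du where "du = dd n l u"
  define dv where "dv = dd n l v"
  define U where "U = u + H"
  define V where "V = v - H"
  define P where "P = set (beta s mu) - {u, v}"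
  have finP: "finite P" unfolding P_def by simp
  have gam: "gammaH n l s lam mu = (cc n l v - cc n l u) mod N" unfolding gammaH_def N_def geo by simp
  have del: "deltaH n l s lam mu = (int n * (dv - du)) mod N" unfolding deltaH_def N_def geo du_def dv_def by simp
  have hh: "hH lam mu = H" using geo by simp
  define cond where "cond = (deltaH n l s lam mu > 0 \<and> [hH lam mu = deltaH n l s lam mu] (mod (int n * int l)))"
  have eta: "[H = (cc n l v - cc n l u) mod N] (mod N) \<or> [H = (int n * (dv - du)) mod N] (mod N)"
    using as(12) unfolding s_def[symmetric] gam del hh N_def[symmetric] by auto
  have oU: "u < U" "U < V" "V < v" using uvH(3,4) unfolding U_def V_def by auto
  have setm: "set (beta s mu) = P \<union> {u, v}" unfolding P_def using uvH(1,2) by auto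
  have setl: "set (beta s lam) = P \<union> {U, V}" unfolding P_def U_def V_def using uvH(5) by auto
  have nP: "u \<notin> P" "v \<notin> P" "U \<notin> P" "V \<notin> P" unfolding P_def U_def V_def using uvH(6,7) by auto
  note ctx = ht_same[OF n l as(4) as(5) as(6) plam pmu cH(1,2,3) uvH(1-7)[unfolded s_def], OF as(10)]
             ht_cross[OF n l as(4) as(5) as(6) plam pmu cH(1,2,3) uvH(1-7)[unfolded s_def], OF as(10)]
  define T where "T = ht rho + ht rho'"
  define Im where "Im = int (Icnt (dd n l) (P \<union> {u, v}))"
  define Il where "Il = int (Icnt (dd n l) (P \<union> {U, V}))"
  define r where "r = length (beta s mu)"
  define C1 where "C1 = int (card {x \<in> P. u < x \<and> x < U})"
  define C2 where "C2 = int (card {x \<in> P. V < x \<and> x < v})"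
  define D where "D = int (card {x \<in> P. U < x \<and> x < V})"
  have Ceq: "int (card ((set (beta s mu) - {u, v}) \<inter> ({u<..<u + H} \<union> {v - H<..<v}))) = C1 + C2"
  proof -
    have "(set (beta s mu) - {u, v}) \<inter> ({u<..<u + H} \<union> {v - H<..<v}) =
        {x \<in> P. u < x \<and> x < U} \<union> {x \<in> P. V < x \<and> x < v}" unfolding P_def U_def V_def by auto
    moreover have "{x \<in> P. u < x \<and> x < U} \<inter> {x \<in> P. V < x \<and> x < v} = {}" using oU by auto
    ultimately show ?thesis unfolding C1_def C2_def using finP by (simp add: card_Un_disjoint)
  qed
  have "int (length kss - 1) - 1 - int (PR r) - 1 - C1 - C2 = int (length kss - 1) - 1 - int (PR (length (beta s mu))) - 1 -
       int (card ((set (beta s mu) - {u, v}) \<inter> ({u<..<u + H} \<union> {v - H<..<v})))"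
    using Ceq unfolding r_def by (simp add: algebra_simps)
  then have parL: "even (int (length kss - 1) - 1 - int (PR r) - 1 - C1 - C2)" using par by (simp only:)
  have Eexp: "int (kappa (map (dd n l) (beta s mu))) + int (v_length (map (dd n l) (rev (beta s mu))))
      + int (v_length (map (dd n l) (beta s lam))) = int (PR r) - Im + Il"
  proof -
    have k: "kappa (map (dd n l) (beta s mu)) + asc (rev (map (dd n l) (beta s mu))) + asc (map (dd n l) (beta s mu)) = PR r"
      using kappa_asc_sum[of "map (dd n l) (beta s mu)"] unfolding r_def by simp
    have a1: "asc (map (dd n l) (beta s mu)) = Icnt (dd n l) (P \<union> {u, v})"
      unfolding asc_map_dec[OF dm] Icnt_def setm ..
    have a2: "asc (map (dd n l) (beta s lam)) = Icnt (dd n l) (P \<union> {U, V})"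
      unfolding asc_map_dec[OF dl] Icnt_def setl ..
    show ?thesis using k a1 a2 unfolding v_length_asc Im_def Il_def by (simp add: rev_map)
  qed
  have eps: "eps_LM n l s lam mu = neg1pow (int (PR r) - Im + Il)"
    unfolding eps_LM_def Eexp ..
  have goal_form: "neg1pow (int (length kss - 1) - 1) = neg1pow T * neg1pow (int (PR r) - Im + Il)
        * (if cond then 1 else -1)" if key: "even (int (length kss - 1) - 1 - (T + (int (PR r) - Im + Il) + (if cond then 0 else 1)))"
  proof -
    have "(if cond then 1 else -1) = neg1pow (if cond then 0 else 1)" unfolding neg1pow_def by auto
    then have "neg1pow T * neg1pow (int (PR r) - Im + Il) * (if cond then 1 else -1)
        = neg1pow (T + (int (PR r) - Im + Il) + (if cond then 0 else 1))" by (simp add: neg1pow_add)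
    then show ?thesis using neg1pow_eq[OF key] by simp
  qed
  have key: "even (int (length kss - 1) - 1 - (T + (int (PR r) - Im + Il) + (if cond then 0 else 1)))"
  proof (cases cond)
    case True
    then have Hd: "[H = (int n * (dd n l v - dd n l u)) mod N] (mod N)" and dpos: "(int n * (dv - du)) mod N > 0"
      unfolding cond_def hh del N_def[symmetric] du_def dv_def by auto
    have dUV: "dd n l U = dv" "dd n l V = du" using dd_shift_delta[OF n l Hd[unfolded N_def]] unfolding U_def V_def du_def dv_def by auto
    have ne: "du \<noteq> dv"
    proof
      assume "du = dv" then show False using dpos by simp
    qed
    have Tc: "T = int (card {k \<in> P. dd n l k = du \<and> u < k \<and> k < V}) + int (card {k \<in> P. dd n l k = dv \<and> U < k \<and> k < v})"
    proof -
      have "ht rho + ht rho' = int (card {k \<in> set (beta (sum_list ss) mu) - {u, v}. dd n l k = dd n l u \<and> u < k \<and> k < v - H})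
           + int (card {k \<in> set (beta (sum_list ss) mu) - {u, v}. dd n l k = dd n l v \<and> u + H < k \<and> k < v})"
        by (rule ctx(2)) (use dUV ne in \<open>simp_all add: U_def V_def du_def dv_def\<close>)
      then show ?thesis unfolding T_def P_def U_def V_def du_def dv_def s_def .
    qed
    have ip: "even (Im + Il - 1 - int (card {x \<in> P. u < x \<and> x < V \<and> dd n l x \<noteq> du}) - int (card {x \<in> P. U < x \<and> x < v \<and> dd n l x \<noteq> dv}))"
      unfolding Im_def Il_def using Ipar_cross[OF finP oU nP(1,3,4,2), of "dd n l", OF dUV(1)[unfolded dv_def] dUV(2)[unfolded du_def] ne[unfolded du_def dv_def]]
      unfolding du_def dv_def .
    have s1: "int (card {k \<in> P. dd n l k = du \<and> u < k \<and> k < V}) + int (card {x \<in> P. u < x \<and> x < V \<and> dd n l x \<noteq> du}) = C1 + D"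
    proof -
      have "card {k \<in> P. dd n l k = du \<and> u < k \<and> k < V} + card {k \<in> P. u < k \<and> k < V \<and> dd n l k \<noteq> du}
          = card {k \<in> P. u < k \<and> k < V}" by (rule cardsplit[OF finP])
      moreover have "card {x \<in> P. u < x \<and> x < V} = card {x \<in> P. u < x \<and> x < U} + card {x \<in> P. U < x \<and> x < V}"
        by (rule cardsplit2[OF finP less_imp_le[OF oU(1)] less_imp_le[OF oU(2)] nP(3)])
      ultimately show ?thesis unfolding C1_def D_def by simp
    qed
    have s2: "int (card {k \<in> P. dd n l k = dv \<and> U < k \<and> k < v}) + int (card {x \<in> P. U < x \<and> x < v \<and> dd n l x \<noteq> dv}) = D + C2"
    proof -
      have "card {k \<in> P. dd n l k = dv \<and> U < k \<and> k < v} + card {k \<in> P. U < k \<and> k < v \<and> dd n l k \<noteq> dv}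
          = card {k \<in> P. U < k \<and> k < v}" by (rule cardsplit[OF finP])
      moreover have "card {x \<in> P. U < x \<and> x < v} = card {x \<in> P. U < x \<and> x < V} + card {x \<in> P. V < x \<and> x < v}"
        by (rule cardsplit2[OF finP less_imp_le[OF oU(2)] less_imp_le[OF oU(3)] nP(4)])
      ultimately show ?thesis unfolding C2_def D_def by simp
    qed
    define B1 where "B1 = int (card {x \<in> P. u < x \<and> x < V \<and> dd n l x \<noteq> du})"
    define B2 where "B2 = int (card {x \<in> P. U < x \<and> x < v \<and> dd n l x \<noteq> dv})"
    have eq: "int (length kss - 1) - 1 - (T + (int (PR r) - Im + Il) + (if cond then 0 else 1))
       = (int (length kss - 1) - 1 - int (PR r) - 1 - C1 - C2) + (Im + Il - 1 - B1 - B2)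
         + 2 * (1 + B1 + B2 - D - Il)"
      using Tc s1 s2 True unfolding B1_def B2_def by simp
    show ?thesis by (subst eq) (intro dvd_add parL ip[folded B1_def B2_def], simp)
  next
    case False
    have same: "dd n l U = du \<and> dd n l V = dv"
    proof (cases "[H = (cc n l v - cc n l u) mod N] (mod N)")
      case True
      then show ?thesis using dd_shift_gamma[OF n l True[unfolded N_def]] unfolding U_def V_def du_def dv_def by auto
    next
      case False2: False
      then have Hd: "[H = (int n * (dv - du)) mod N] (mod N)" using eta by auto
      have "\<not> (int n * (dv - du)) mod N > 0" using \<open>\<not> cond\<close> Hd unfolding cond_def hh del N_def by auto
      moreover have "(int n * (dv - du)) mod N \<ge> 0" unfolding N_def using n l by simp
      ultimately have "(int n * (dv - du)) mod N = 0" by simp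
      then have dvu: "dv = du" unfolding N_def du_def dv_def by (rule delta_zero[OF n l])
      show ?thesis using dd_shift_delta[OF n l Hd[unfolded N_def du_def dv_def]] dvu unfolding U_def V_def du_def dv_def by auto
    qed
    have Ts: "T = int (card {k \<in> P. dd n l k = du \<and> u < k \<and> k < U}) + int (card {k \<in> P. dd n l k = dv \<and> V < k \<and> k < v})"
    proof -
      have "ht rho + ht rho' = int (card {k \<in> set (beta (sum_list ss) mu) - {u, v}. dd n l k = dd n l u \<and> u < k \<and> k < u + H})
           + int (card {k \<in> set (beta (sum_list ss) mu) - {u, v}. dd n l k = dd n l v \<and> v - H < k \<and> k < v})"
        by (rule ctx(1)) (use same in \<open>simp_all add: U_def V_def du_def dv_def\<close>)
      then show ?thesis unfolding T_def P_def U_def V_def du_def dv_def s_def .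
    qed
    have ip: "even (Im + Il - int (card {x \<in> P. u < x \<and> x < U \<and> dd n l x \<noteq> du}) - int (card {x \<in> P. V < x \<and> x < v \<and> dd n l x \<noteq> dv}))"
      unfolding Im_def Il_def using Ipar_same[OF finP oU nP(1,3,4,2), of "dd n l", OF conjunct1[OF same, unfolded du_def] conjunct2[OF same, unfolded dv_def]]
      unfolding du_def dv_def .
    have s1: "int (card {k \<in> P. dd n l k = du \<and> u < k \<and> k < U}) + int (card {x \<in> P. u < x \<and> x < U \<and> dd n l x \<noteq> du}) = C1"
    proof -
      have "card {k \<in> P. dd n l k = du \<and> u < k \<and> k < U} + card {k \<in> P. u < k \<and> k < U \<and> dd n l k \<noteq> du}
          = card {k \<in> P. u < k \<and> k < U}" by (rule cardsplit[OF finP])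
      then show ?thesis unfolding C1_def by simp
    qed
    have s2: "int (card {k \<in> P. dd n l k = dv \<and> V < k \<and> k < v}) + int (card {x \<in> P. V < x \<and> x < v \<and> dd n l x \<noteq> dv}) = C2"
    proof -
      have "card {k \<in> P. dd n l k = dv \<and> V < k \<and> k < v} + card {k \<in> P. V < k \<and> k < v \<and> dd n l k \<noteq> dv}
          = card {k \<in> P. V < k \<and> k < v}" by (rule cardsplit[OF finP])
      then show ?thesis unfolding C2_def by simp
    qed
    define B1 where "B1 = int (card {x \<in> P. u < x \<and> x < U \<and> dd n l x \<noteq> du})"
    define B2 where "B2 = int (card {x \<in> P. V < x \<and> x < v \<and> dd n l x \<noteq> dv})"
    have eq: "int (length kss - 1) - 1 - (T + (int (PR r) - Im + Il) + (if cond then 0 else 1))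
       = (int (length kss - 1) - 1 - int (PR r) - 1 - C1 - C2) + (Im + Il - B1 - B2)
         + 2 * (B1 + B2 - Il)"
      using Ts s1 s2 False unfolding B1_def B2_def by simp
    show ?thesis by (subst eq) (intro dvd_add parL ip[folded B1_def B2_def], simp)
  qed
  show ?thesis
    using goal_form[OF key] eps unfolding T_def cond_def s_def by simp
qed

end
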